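(* In the setting described in the context, one has identically on $M$: $$\overline{\mathcal K}(H_0)=-2\,\overline{\mathcal L}_1(\bar k)\,H_0 .$$
   Context: Let $M\subset\mathbb C^3$ be a real-analytic real hypersurface, considered locally near a point, represented in holomorphic coordinates $(z_1,z_2,w)$, $w=u+iv$, as a graph $u=F(z_1,z_2,\bar z_1,\bar z_2,v)$; $(z_1,z_2,\bar z_1,\bar z_2,v)$ are coordinates on $M$. Bars denote complex conjugation. Put $A^j:=-iF_{z_j}/(1+iF_v)$ ($j=1,2$), $\mathcal L_j:=\partial_{z_j}+A^j\partial_v$, with conjugates $\overline{\mathcal L}_j$. Let $\ell:=i(\mathcal L_1(\overline{A^1})-\overline{\mathcal L}_1(A^1))$, assumed nowhere zero. Assume the Levi form of $M$ has constant rank $1$, let $k:=-(\mathcal L_2(\overline{A^1})-\overline{\mathcal L}_1(A^2))/(\mathcal L_1(\overline{A^1})-\overline{\mathcal L}_1(A^1))$, $\mathcal K:=k\mathcal L_1+\mathcal L_2$, $\overline{\mathcal K}=\bar k\overline{\mathcal L}_1+\overline{\mathcal L}_2$. Assume 2-nondegeneracy: $\overline{\mathcal L}_1(k)$ vanishes nowhere. Let $P:=(\ell_{z_1}+A^1\ell_v-\ell A^1_v)/\ell$ and $$H_0:=-\tfrac16\tfrac{\overline{\mathcal L}_1(\overline{\mathcal L}_1(\overline{\mathcal L}_1(k)))}{\overline{\mathcal L}_1(k)}+\tfrac29\tfrac{\overline{\mathcal L}_1(\overline{\mathcal L}_1(k))^2}{\overline{\mathcal L}_1(k)^2}+\tfrac1{18}\tfrac{\overline{\mathcal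 L}_1(\overline{\mathcal L}_1(k))\,\overline P}{\overline{\mathcal L}_1(k)}+\tfrac16\overline{\mathcal L}_1(\overline P)-\tfrac19\overline P^{\,2}.$$ *)

theory Defs
  imports "HOL-Analysis.Analysis"
begin

text \<open>Points of M in the coordinates (z1, z2, v), z_j complex, v real.
  Real coordinates: z_j = x_j + i y_j.\<close>
type_synonym pt = "complex \<times> complex \<times> real"

definition pd :: "pt \<Rightarrow> (pt \<Rightarrow> complex) \<Rightarrow> pt \<Rightarrow> complex" where
  "pd e f p = frechet_derivative f (at p) e"

definition ex1 :: pt where "ex1 = (1, 0, 0)"
definition ey1 :: pt where "ey1 = (\<i>, 0, 0)"
definition ex2 :: pt where "ex2 = (0, 1, 0)"
definition ey2 :: pt where "ey2 = (0, \<i>, 0)"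
definition ev :: pt where "ev = (0, 0, 1)"

definition dz1 :: "(pt \<Rightarrow> complex) \<Rightarrow> pt \<Rightarrow> complex" where
  "dz1 f p = (pd ex1 f p - \<i> * pd ey1 f p) / 2"
definition dz2 :: "(pt \<Rightarrow> complex) \<Rightarrow> pt \<Rightarrow> complex" where
  "dz2 f p = (pd ex2 f p - \<i> * pd ey2 f p) / 2"
definition dzb1 :: "(pt \<Rightarrow> complex) \<Rightarrow> pt \<Rightarrow> complex" where
  "dzb1 f p = (pd ex1 f p + \<i> * pd ey1 f p) / 2"
definition dzb2 :: "(pt \<Rightarrow> complex) \<Rightarrow> pt \<Rightarrow> complex" where
  "dzb2 f p = (pd ex2 f p + \<i> * pd ey2 f p) / 2"
definition dv :: "(pt \<Rightarrow> complex) \<Rightarrow> pt \<Rightarrow> complex" where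
  "dv f p = pd ev f p"

definition cj :: "(pt \<Rightarrow> complex) \<Rightarrow> pt \<Rightarrow> complex" where
  "cj f p = cnj (f p)"

definition smooth_on :: "pt set \<Rightarrow> (pt \<Rightarrow> complex) \<Rightarrow> bool" where
  "smooth_on U f \<longleftrightarrow>
     (\<forall>es. set es \<subseteq> {ex1, ey1, ex2, ey2, ev} \<longrightarrow>
        (\<forall>p\<in>U. foldr pd es f differentiable (at p)))"

text \<open>The data attached to the defining function F of M: u = F(z, zbar, v).\<close>
definition Fc :: "(pt \<Rightarrow> real) \<Rightarrow> pt \<Rightarrow> complex" where
  "Fc F p = complex_of_real (F p)"

definition A1 :: "(pt \<Rightarrow> real) \<Rightarrow> pt \<Rightarrow> complex" where
  "A1 F p = - \<i> * dz1 (Fc F) p / (1 + \<i> * dv (Fc F) p)"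
definition A2 :: "(pt \<Rightarrow> real) \<Rightarrow> pt \<Rightarrow> complex" where
  "A2 F p = - \<i> * dz2 (Fc F) p / (1 + \<i> * dv (Fc F) p)"

definition L1 :: "(pt \<Rightarrow> real) \<Rightarrow> (pt \<Rightarrow> complex) \<Rightarrow> pt \<Rightarrow> complex" where
  "L1 F g p = dz1 g p + A1 F p * dv g p"
definition L2 :: "(pt \<Rightarrow> real) \<Rightarrow> (pt \<Rightarrow> complex) \<Rightarrow> pt \<Rightarrow> complex" where
  "L2 F g p = dz2 g p + A2 F p * dv g p"
definition Lb1 :: "(pt \<Rightarrow> real) \<Rightarrow> (pt \<Rightarrow> complex) \<Rightarrow> pt \<Rightarrow> complex" where
  "Lb1 F g p = dzb1 g p + cnj (A1 F p) * dv g p"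
definition Lb2 :: "(pt \<Rightarrow> real) \<Rightarrow> (pt \<Rightarrow> complex) \<Rightarrow> pt \<Rightarrow> complex" where
  "Lb2 F g p = dzb2 g p + cnj (A2 F p) * dv g p"

text \<open>Levi matrix entries: [L_j, Lbar_k] = (L_j(conj A^k) - Lbar_k(A^j)) d/dv.\<close>
definition levi :: "(pt \<Rightarrow> real) \<Rightarrow> nat \<Rightarrow> nat \<Rightarrow> pt \<Rightarrow> complex" where
  "levi F j k p =
     (let Lj = (if j = 1 then L1 F else L2 F);
          Lbk = (if k = 1 then Lb1 F else Lb2 F);
          Ak = (if k = 1 then A1 F else A2 F);
          Aj = (if j = 1 then A1 F else A2 F)
      in Lj (cj Ak) p - Lbk Aj p)"

definition levi_rank_one :: "(pt \<Rightarrow> real) \<Rightarrow> pt \<Rightarrow> bool" where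
  "levi_rank_one F p \<longleftrightarrow>
     (\<exists>j\<in>{1,2}. \<exists>k\<in>{1,2}. levi F j k p \<noteq> 0) \<and>
     levi F 1 1 p * levi F 2 2 p - levi F 1 2 p * levi F 2 1 p = 0"

definition ell :: "(pt \<Rightarrow> real) \<Rightarrow> pt \<Rightarrow> complex" where
  "ell F p = \<i> * (L1 F (cj (A1 F)) p - Lb1 F (A1 F) p)"

definition kk :: "(pt \<Rightarrow> real) \<Rightarrow> pt \<Rightarrow> complex" where
  "kk F p = - (L2 F (cj (A1 F)) p - Lb1 F (A2 F) p) / (L1 F (cj (A1 F)) p - Lb1 F (A1 F) p)"

definition Kb :: "(pt \<Rightarrow> real) \<Rightarrow> (pt \<Rightarrow> complex) \<Rightarrow> pt \<Rightarrow> complex" where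
  "Kb F g p = cnj (kk F p) * Lb1 F g p + Lb2 F g p"

definition PP :: "(pt \<Rightarrow> real) \<Rightarrow> pt \<Rightarrow> complex" where
  "PP F p = (dz1 (ell F) p + A1 F p * dv (ell F) p - ell F p * dv (A1 F) p) / ell F p"

definition H0 :: "(pt \<Rightarrow> real) \<Rightarrow> pt \<Rightarrow> complex" where
  "H0 F p =
    (let k = kk F; Pb = cj (PP F);
         k1 = Lb1 F k; k2 = Lb1 F k1; k3 = Lb1 F k2
     in - (1/6) * k3 p / k1 p + (2/9) * (k2 p)^2 / (k1 p)^2
        + (1/18) * k2 p * Pb p / k1 p + (1/6) * Lb1 F Pb p - (1/9) * (Pb p)^2)"

end

theory Submission
  imports Defs
begin

lemma pd_lin:
  assumes "f differentiable (at p)"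
  shows "pd (s *\<^sub>R a) f p = s *\<^sub>R pd a f p" "pd (a + b) f p = pd a f p + pd b f p"
proof -
  have "bounded_linear (frechet_derivative f (at p))"
    using assms frechet_derivative_works has_derivative_bounded_linear by blast
  then interpret bounded_linear "frechet_derivative f (at p)" .
  show "pd (s *\<^sub>R a) f p = s *\<^sub>R pd a f p" "pd (a + b) f p = pd a f p + pd b f p"
    unfolding pd_def by (simp_all add: scale add)
qed

lemma schwarz_half:
  fixes f :: "pt \<Rightarrow> complex"
  assumes U: "open U" "p \<in> U" and df: "\<forall>x\<in>U. f differentiable (at x)"
    and dg: "pd a f differentiable (at p)" and e: "e > 0"
  shows "\<exists>d>0. \<forall>t. 0 < t \<and> t < d \<longrightarrow>
    norm (f (p + t *\<^sub>R a + t *\<^sub>R b) - f (p + t *\<^sub>R a) - f (p + t *\<^sub>R b) + f p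
          - (t * t) *\<^sub>R pd b (pd a f) p) \<le> e * (t * t) * (2 * norm a + norm b)"
proof -
  define G where "G = frechet_derivative (pd a f) (at p)"
  have hG: "(pd a f has_derivative G) (at p)" using dg frechet_derivative_works G_def by blast
  then have blG: "bounded_linear G" and
    "\<forall>e>0. \<exists>d>0. \<forall>y. norm(y - p) < d \<longrightarrow> norm (pd a f y - pd a f p - G (y - p)) \<le> e * norm (y - p)"
    using has_derivative_at_alt by blast+
  then obtain d1 where d1: "d1 > 0" and
    hd1: "\<And>y. norm(y - p) < d1 \<Longrightarrow> norm (pd a f y - pd a f p - G (y - p)) \<le> e * norm (y - p)"
    using e by blast
  obtain d3 where d3: "d3 > 0" "ball p d3 \<subseteq> U" using U open_contains_ball by blast
  define d where "d = min d1 d3 / (norm a + norm b + 1)"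
  have dpos: "d > 0" using d1 d3 unfolding d_def by (intro divide_pos_pos) (auto intro: add_nonneg_pos)
  interpret G: bounded_linear G by (rule blG)
  have pdG: "pd b (pd a f) p = G b" unfolding pd_def G_def ..
  show ?thesis
  proof (intro exI[of _ d] conjI allI impI dpos)
    fix t :: real assume t: "0 < t \<and> t < d"
    have small: "norm (s *\<^sub>R a + r *\<^sub>R b) < min d1 d3" if "0 \<le> s" "s \<le> t" "0 \<le> r" "r \<le> t" for s r
    proof -
      have "norm (s *\<^sub>R a + r *\<^sub>R b) \<le> s * norm a + r * norm b"
        using that by (metis abs_of_nonneg norm_scaleR norm_triangle_le add_mono order_refl)
      also have "\<dots> \<le> t * (norm a + norm b)" using that
        by (simp add: distrib_left mult_right_mono add_mono)
      also have "\<dots> < d * (norm a + norm b + 1)"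
      proof -
        have "t * (norm a + norm b) \<le> d * (norm a + norm b)" using t by (intro mult_right_mono) auto
        then show ?thesis using dpos by (simp add: distrib_left)
      qed
      also have "\<dots> = min d1 d3" unfolding d_def
        by (smt (verit) nonzero_eq_divide_eq norm_ge_zero)
      finally show ?thesis .
    qed
    have inU: "p + (s *\<^sub>R a + r *\<^sub>R b) \<in> U" if "0 \<le> s" "s \<le> t" "0 \<le> r" "r \<le> t" for s r
    proof -
      have "dist p (p + (s *\<^sub>R a + r *\<^sub>R b)) < d3" using small[OF that]
        by (simp add: dist_norm) (metis minus_add_distrib norm_minus_cancel diff_conv_add_uminus)
      then show ?thesis using d3 by auto
    qed
    have approx: "norm (pd a f (p + (s *\<^sub>R a + r *\<^sub>R b)) - pd a f p - (s *\<^sub>R G a + r *\<^sub>R G b))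
        \<le> e * norm (s *\<^sub>R a + r *\<^sub>R b)" if "0 \<le> s" "s \<le> t" "0 \<le> r" "r \<le> t" for s r
      using hd1[of "p + (s *\<^sub>R a + r *\<^sub>R b)"] small[OF that] by (simp add: G.add G.scale)
    define c where "c = t *\<^sub>R G b"
    define H where "H s = f (p + s *\<^sub>R a + t *\<^sub>R b) - f (p + s *\<^sub>R a) - s *\<^sub>R c" for s
    define D where "D s = pd a f (p + s *\<^sub>R a + t *\<^sub>R b) - pd a f (p + s *\<^sub>R a) - c" for s
    have derH: "(H has_derivative (\<lambda>h. h *\<^sub>R D s)) (at s within {0..t})" if s: "s \<in> {0..t}" for s
    proof -
      have x1: "p + s *\<^sub>R a + t *\<^sub>R b \<in> U" using inU[of s t] s t by (simp add: add.assoc)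
      have x2: "p + s *\<^sub>R a \<in> U" using inU[of s 0] s t by simp
      have l1: "((\<lambda>s. p + s *\<^sub>R a + t *\<^sub>R b) has_derivative (\<lambda>h. h *\<^sub>R a)) (at s within {0..t})"
        by (auto intro!: derivative_eq_intros)
      have l2: "((\<lambda>s. p + s *\<^sub>R a) has_derivative (\<lambda>h. h *\<^sub>R a)) (at s within {0..t})"
        by (auto intro!: derivative_eq_intros)
      have f1: "(f has_derivative frechet_derivative f (at (p + s *\<^sub>R a + t *\<^sub>R b))) (at (p + s *\<^sub>R a + t *\<^sub>R b))"
        using df x1 frechet_derivative_works by blast
      have f2: "(f has_derivative frechet_derivative f (at (p + s *\<^sub>R a))) (at (p + s *\<^sub>R a))"
        using df x2 frechet_derivative_works by blast
      have c1: "((\<lambda>s. f (p + s *\<^sub>R a + t *\<^sub>R b)) has_derivative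
           (\<lambda>h. frechet_derivative f (at (p + s *\<^sub>R a + t *\<^sub>R b)) (h *\<^sub>R a))) (at s within {0..t})"
        using has_derivative_compose[OF l1 f1] .
      have c2: "((\<lambda>s. f (p + s *\<^sub>R a)) has_derivative
           (\<lambda>h. frechet_derivative f (at (p + s *\<^sub>R a)) (h *\<^sub>R a))) (at s within {0..t})"
        using has_derivative_compose[OF l2 f2] .
      have c3: "((\<lambda>s. s *\<^sub>R c) has_derivative (\<lambda>h. h *\<^sub>R c)) (at s within {0..t})"
        by (auto intro!: derivative_eq_intros)
      have "(H has_derivative (\<lambda>h. frechet_derivative f (at (p + s *\<^sub>R a + t *\<^sub>R b)) (h *\<^sub>R a)
             - frechet_derivative f (at (p + s *\<^sub>R a)) (h *\<^sub>R a) - h *\<^sub>R c)) (at s within {0..t})"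
        unfolding H_def by (intro has_derivative_diff c1 c2 c3)
      moreover have "(\<lambda>h. frechet_derivative f (at (p + s *\<^sub>R a + t *\<^sub>R b)) (h *\<^sub>R a)
             - frechet_derivative f (at (p + s *\<^sub>R a)) (h *\<^sub>R a) - h *\<^sub>R c) = (\<lambda>h. h *\<^sub>R D s)"
      proof
        fix h
        have "frechet_derivative f (at (p + s *\<^sub>R a + t *\<^sub>R b)) (h *\<^sub>R a) = h *\<^sub>R pd a f (p + s *\<^sub>R a + t *\<^sub>R b)"
          using pd_lin(1)[of f "p + s *\<^sub>R a + t *\<^sub>R b" h a] df x1 by (simp add: pd_def)
        moreover have "frechet_derivative f (at (p + s *\<^sub>R a)) (h *\<^sub>R a) = h *\<^sub>R pd a f (p + s *\<^sub>R a)"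
          using pd_lin(1)[of f "p + s *\<^sub>R a" h a] df x2 by (simp add: pd_def)
        ultimately show "frechet_derivative f (at (p + s *\<^sub>R a + t *\<^sub>R b)) (h *\<^sub>R a)
             - frechet_derivative f (at (p + s *\<^sub>R a)) (h *\<^sub>R a) - h *\<^sub>R c = h *\<^sub>R D s"
          by (simp add: D_def scaleR_diff_right)
      qed
      ultimately show ?thesis by simp
    qed
    have bndD: "norm (D s) \<le> e * t * (2 * norm a + norm b)" if s: "s \<in> {0..t}" for s
    proof -
      have A1: "norm (pd a f (p + (s *\<^sub>R a + t *\<^sub>R b)) - pd a f p - (s *\<^sub>R G a + t *\<^sub>R G b))
        \<le> e * norm (s *\<^sub>R a + t *\<^sub>R b)" using approx[of s t] s t by simp
      have A2: "norm (pd a f (p + (s *\<^sub>R a + 0 *\<^sub>R b)) - pd a f p - (s *\<^sub>R G a + 0 *\<^sub>R G b))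
        \<le> e * norm (s *\<^sub>R a + 0 *\<^sub>R b)" using approx[of s 0] s t by simp
      have n1: "norm (s *\<^sub>R a + t *\<^sub>R b) \<le> t * norm a + t * norm b"
        using s t norm_triangle_le[of "s *\<^sub>R a" "t *\<^sub>R b"]
        by (smt (verit, best) atLeastAtMost_iff mult_right_mono norm_ge_zero norm_scaleR)
      have n2: "norm (s *\<^sub>R a) \<le> t * norm a" using s by (simp add: mult_right_mono)
      have "D s = (pd a f (p + (s *\<^sub>R a + t *\<^sub>R b)) - pd a f p - (s *\<^sub>R G a + t *\<^sub>R G b))
          - (pd a f (p + (s *\<^sub>R a + 0 *\<^sub>R b)) - pd a f p - (s *\<^sub>R G a + 0 *\<^sub>R G b))"
        by (simp add: D_def c_def add.assoc)
      then have "norm (D s) \<le> e * norm (s *\<^sub>R a + t *\<^sub>R b) + e * norm (s *\<^sub>R a + 0 *\<^sub>R b)"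
        using A1 A2 norm_triangle_ineq4 by (smt (verit))
      also have "\<dots> \<le> e * (t * norm a + t * norm b) + e * (t * norm a)"
        using n1 n2 e by (simp add: add_mono mult_left_mono)
      also have "\<dots> = e * t * (2 * norm a + norm b)" by (simp add: algebra_simps)
      finally show ?thesis .
    qed
    have "norm (H t - H 0) \<le> (e * t * (2 * norm a + norm b)) * norm (t - 0)"
    proof (rule differentiable_bound[where f' = "\<lambda>s h. h *\<^sub>R D s"])
      show "convex {0..t}" by simp
      show "\<And>x. x \<in> {0..t} \<Longrightarrow> (H has_derivative (\<lambda>h. h *\<^sub>R D x)) (at x within {0..t})"
        using derH by blast
      show "onorm (\<lambda>h. h *\<^sub>R D x) \<le> e * t * (2 * norm a + norm b)" if "x \<in> {0..t}" for x
        by (rule onorm_le) (use bndD[OF that] in \<open>simp add: mult.commute mult_left_mono\<close>)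
    qed (use t in auto)
    moreover have "H t - H 0 = f (p + t *\<^sub>R a + t *\<^sub>R b) - f (p + t *\<^sub>R a) - f (p + t *\<^sub>R b) + f p
          - (t * t) *\<^sub>R pd b (pd a f) p"
      by (simp add: H_def c_def pdG)
    ultimately show "norm (f (p + t *\<^sub>R a + t *\<^sub>R b) - f (p + t *\<^sub>R a) - f (p + t *\<^sub>R b) + f p
          - (t * t) *\<^sub>R pd b (pd a f) p) \<le> e * (t * t) * (2 * norm a + norm b)"
      using t by (simp add: algebra_simps)
  qed
qed

lemma schwarz:
  fixes f :: "pt \<Rightarrow> complex"
  assumes U: "open U" "p \<in> U" and df: "\<forall>x\<in>U. f differentiable (at x)"
    and da: "pd a f differentiable (at p)" and db: "pd b f differentiable (at p)"
  shows "pd b (pd a f) p = pd a (pd b f) p"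
proof -
  let ?X = "pd b (pd a f) p" and ?Y = "pd a (pd b f) p"
  have "norm (?X - ?Y) \<le> e * (3 * (norm a + norm b))" if e: "e > 0" for e
  proof -
    obtain d1 where d1: "d1 > 0" and h1: "\<And>t. 0 < t \<and> t < d1 \<Longrightarrow>
      norm (f (p + t *\<^sub>R a + t *\<^sub>R b) - f (p + t *\<^sub>R a) - f (p + t *\<^sub>R b) + f p
          - (t * t) *\<^sub>R ?X) \<le> e * (t * t) * (2 * norm a + norm b)"
      using schwarz_half[OF U df da e, of b] by blast
    obtain d2 where d2: "d2 > 0" and h2: "\<And>t. 0 < t \<and> t < d2 \<Longrightarrow>
      norm (f (p + t *\<^sub>R b + t *\<^sub>R a) - f (p + t *\<^sub>R b) - f (p + t *\<^sub>R a) + f p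
          - (t * t) *\<^sub>R ?Y) \<le> e * (t * t) * (2 * norm b + norm a)"
      using schwarz_half[OF U df db e, of a] by blast
    define t where "t = min d1 d2 / 2"
    have t: "0 < t" "t < d1" "t < d2" using d1 d2 by (auto simp: t_def)
    define \<Delta> where "\<Delta> = f (p + t *\<^sub>R a + t *\<^sub>R b) - f (p + t *\<^sub>R a) - f (p + t *\<^sub>R b) + f p"
    have "p + t *\<^sub>R b + t *\<^sub>R a = p + t *\<^sub>R a + t *\<^sub>R b" by (simp add: algebra_simps)
    then have E2: "f (p + t *\<^sub>R b + t *\<^sub>R a) - f (p + t *\<^sub>R b) - f (p + t *\<^sub>R a) + f p = \<Delta>"
      unfolding \<Delta>_def by (simp only:) (simp add: algebra_simps)
    have A: "norm (\<Delta> - (t * t) *\<^sub>R ?X) \<le> e * (t * t) * (2 * norm a + norm b)"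
      using h1[of t] t by (simp add: \<Delta>_def)
    have B: "norm (\<Delta> - (t * t) *\<^sub>R ?Y) \<le> e * (t * t) * (2 * norm b + norm a)"
      using h2[of t] t E2 by simp
    have "(t * t) *\<^sub>R (?X - ?Y) = (\<Delta> - (t * t) *\<^sub>R ?Y) - (\<Delta> - (t * t) *\<^sub>R ?X)"
      by (simp add: algebra_simps)
    then have "norm ((t * t) *\<^sub>R (?X - ?Y)) \<le> e * (t * t) * (2 * norm a + norm b) + e * (t * t) * (2 * norm b + norm a)"
      using A B norm_triangle_ineq4 by (smt (verit))
    also have "\<dots> = (t * t) * (e * (3 * (norm a + norm b)))" by (simp add: algebra_simps)
    finally have "(t * t) * norm (?X - ?Y) \<le> (t * t) * (e * (3 * (norm a + norm b)))"
      using t by simp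
    then show ?thesis using t by (simp add: mult_le_cancel_left_pos)
  qed
  then have "norm (?X - ?Y) \<le> 0"
  proof -
    assume h: "\<And>e. e > 0 \<Longrightarrow> norm (?X - ?Y) \<le> e * (3 * (norm a + norm b))"
    show ?thesis
    proof (rule field_le_epsilon)
      fix e :: real assume e: "e > 0"
      have "norm (?X - ?Y) \<le> (e / (3 * (norm a + norm b) + 1)) * (3 * (norm a + norm b))"
        using h[of "e / (3 * (norm a + norm b) + 1)"] e by (simp add: add_nonneg_pos)
      also have "\<dots> \<le> e"
      proof -
        have "0 \<le> 3 * (norm a + norm b)" by simp
        then have "(3 * (norm a + norm b)) / (3 * (norm a + norm b) + 1) \<le> 1"
          by (subst divide_le_eq_1) (auto simp: add_nonneg_pos)
        then have "e * ((3 * (norm a + norm b)) / (3 * (norm a + norm b) + 1)) \<le> e * 1"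
          using e by (intro mult_left_mono) auto
        then show ?thesis by simp
      qed
      finally show "norm (?X - ?Y) \<le> 0 + e" by simp
    qed
  qed
  then show ?thesis by simp
qed

definition B5 :: "pt set" where "B5 = {ex1, ey1, ex2, ey2, ev}"

definition smn :: "pt set \<Rightarrow> nat \<Rightarrow> (pt \<Rightarrow> complex) \<Rightarrow> bool" where
  "smn U n f \<longleftrightarrow> (\<forall>es. set es \<subseteq> B5 \<and> length es \<le> n \<longrightarrow> (\<forall>p\<in>U. foldr pd es f differentiable (at p)))"

definition eqon :: "pt set \<Rightarrow> (pt \<Rightarrow> complex) \<Rightarrow> (pt \<Rightarrow> complex) \<Rightarrow> bool" where
  "eqon U f g \<longleftrightarrow> (\<forall>x\<in>U. f x = g x)"

lemma smooth_on_smn: "smooth_on U f \<longleftrightarrow> (\<forall>n. smn U n f)"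
  unfolding smooth_on_def smn_def B5_def by blast

lemma smn_mono: "smn U n f \<Longrightarrow> m \<le> n \<Longrightarrow> smn U m f"
  unfolding smn_def using le_trans by blast

lemma smn_0: "smn U 0 f \<longleftrightarrow> (\<forall>p\<in>U. f differentiable (at p))"
  unfolding smn_def by auto

lemma smn_Suc: "smn U (Suc n) f \<longleftrightarrow> smn U 0 f \<and> (\<forall>e\<in>B5. smn U n (pd e f))"
proof
  assume h: "smn U (Suc n) f"
  show "smn U 0 f \<and> (\<forall>e\<in>B5. smn U n (pd e f))"
  proof (intro conjI ballI)
    show "smn U 0 f" using h smn_mono by blast
    fix e assume e: "e \<in> B5"
    show "smn U n (pd e f)" unfolding smn_def
    proof (intro allI impI)
      fix es assume es: "set es \<subseteq> B5 \<and> length es \<le> n"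
      have "set (es @ [e]) \<subseteq> B5 \<and> length (es @ [e]) \<le> Suc n" using es e by auto
      then have "\<forall>p\<in>U. foldr pd (es @ [e]) f differentiable (at p)" using h unfolding smn_def by blast
      then show "\<forall>p\<in>U. foldr pd es (pd e f) differentiable (at p)" by simp
    qed
  qed
next
  assume h: "smn U 0 f \<and> (\<forall>e\<in>B5. smn U n (pd e f))"
  show "smn U (Suc n) f" unfolding smn_def
  proof (intro allI impI)
    fix es :: "pt list" assume es: "set es \<subseteq> B5 \<and> length es \<le> Suc n"
    show "\<forall>p\<in>U. foldr pd es f differentiable (at p)"
    proof (cases es rule: rev_exhaust)
      case Nil then show ?thesis using h by (simp add: smn_0)
    next
      case (snoc ys e)
      then have "foldr pd es f = foldr pd ys (pd e f)" by simp
      moreover have "e \<in> B5" "set ys \<subseteq> B5 \<and> length ys \<le> n" using es snoc by auto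
      moreover have "smn U n (pd e f)" using h \<open>e \<in> B5\<close> by blast
      ultimately show ?thesis unfolding smn_def by auto
    qed
  qed
qed

lemma smn_diff: "smn U n f \<Longrightarrow> p \<in> U \<Longrightarrow> f differentiable (at p)"
  unfolding smn_def by (drule spec[of _ "[]"]) auto


lemma hd_fd: "f differentiable (at p) \<Longrightarrow> (f has_derivative frechet_derivative f (at p)) (at p)"
  using frechet_derivative_works by blast

lemma pd_of: "(f has_derivative f') (at p) \<Longrightarrow> pd e f p = f' e"
  unfolding pd_def using frechet_derivative_at by metis

lemma pd_add: assumes "f differentiable (at p)" "g differentiable (at p)"
  shows "pd e (\<lambda>x. f x + g x) p = pd e f p + pd e g p"
proof -
  have "((\<lambda>x. f x + g x) has_derivative (\<lambda>h. frechet_derivative f (at p) h + frechet_derivative g (at p) h)) (at p)"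
    using hd_fd[OF assms(1)] hd_fd[OF assms(2)] by (rule has_derivative_add)
  from pd_of[OF this] show ?thesis by (simp add: pd_def)
qed

lemma pd_diff: assumes "f differentiable (at p)" "g differentiable (at p)"
  shows "pd e (\<lambda>x. f x - g x) p = pd e f p - pd e g p"
proof -
  have "((\<lambda>x. f x - g x) has_derivative (\<lambda>h. frechet_derivative f (at p) h - frechet_derivative g (at p) h)) (at p)"
    using hd_fd[OF assms(1)] hd_fd[OF assms(2)] by (rule has_derivative_diff)
  from pd_of[OF this] show ?thesis by (simp add: pd_def)
qed

lemma pd_mult: assumes "f differentiable (at p)" "g differentiable (at p)"
  shows "pd e (\<lambda>x. f x * g x) p = f p * pd e g p + pd e f p * g p"
proof -
  have "((\<lambda>x. f x * g x) has_derivative (\<lambda>h. f p * frechet_derivative g (at p) h + frechet_derivative f (at p) h * g p)) (at p)"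
    using hd_fd[OF assms(1)] hd_fd[OF assms(2)] by (rule has_derivative_mult)
  from pd_of[OF this] show ?thesis by (simp add: pd_def)
qed

lemma pd_const: "pd e (\<lambda>x. c) p = 0"
  using pd_of[OF has_derivative_const[of c]] by simp

lemma pd_cnj: assumes "f differentiable (at p)"
  shows "pd e (\<lambda>x. cnj (f x)) p = cnj (pd e f p)"
proof -
  have "((\<lambda>x. cnj (f x)) has_derivative (\<lambda>h. cnj (frechet_derivative f (at p) h))) (at p)"
    using hd_fd[OF assms(1)] by (rule has_derivative_cnj)
  from pd_of[OF this] show ?thesis by (simp add: pd_def)
qed

lemma pd_inverse: assumes "f differentiable (at p)" "f p \<noteq> 0"
  shows "pd e (\<lambda>x. inverse (f x)) p = - (pd e f p / (f p)^2)"
proof -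
  have "((\<lambda>x. inverse (f x)) has_derivative (\<lambda>h. - (inverse (f p) * frechet_derivative f (at p) h * inverse (f p)))) (at p)"
    using Deriv.has_derivative_inverse[OF assms(2) hd_fd[OF assms(1)]] .
  from pd_of[OF this] show ?thesis using assms(2) by (simp add: pd_def field_simps power2_eq_square)
qed

lemma pd_linear: "bounded_linear f \<Longrightarrow> pd e f p = f e"
  using pd_of[OF bounded_linear_imp_has_derivative] by blast

lemma pd_local:
  assumes "open U" "p \<in> U" "eqon U f g" "f differentiable (at p)"
  shows "pd e f p = pd e g p" "g differentiable (at p)"
proof -
  have "(g has_derivative frechet_derivative f (at p)) (at p)"
    by (rule has_derivative_transform_within_open[OF hd_fd[OF assms(4)] assms(1,2)])
       (use assms(3) in \<open>auto simp: eqon_def\<close>)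
  then show "pd e f p = pd e g p" "g differentiable (at p)"
    using pd_of[of g] by (auto simp: pd_def differentiable_def)
qed

lemma smn_local: "open U \<Longrightarrow> eqon U f g \<Longrightarrow> smn U n f \<Longrightarrow> smn U n g"
proof (induction n arbitrary: f g)
  case 0 then show ?case using pd_local(2) by (auto simp: smn_0)
next
  case (Suc n)
  have "smn U 0 g" using Suc.prems pd_local(2) smn_diff by (auto simp: smn_0)
  moreover have "smn U n (pd e g)" if "e \<in> B5" for e
  proof -
    have "eqon U (pd e f) (pd e g)" unfolding eqon_def
      using Suc.prems pd_local(1) smn_diff by blast
    then show ?thesis using Suc that by (auto simp: smn_Suc)
  qed
  ultimately show ?case by (simp add: smn_Suc)
qed

lemma smn_const: "smn U n (\<lambda>x. c)"
proof (induction n arbitrary: c)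
  case 0 then show ?case by (simp add: smn_0)
next
  case (Suc n)
  have "pd e (\<lambda>x. c) = (\<lambda>x. 0)" for e by (auto simp: pd_const)
  then show ?case using Suc by (simp add: smn_Suc smn_0)
qed

lemma smn_linear: "bounded_linear f \<Longrightarrow> smn U n f"
proof (cases n)
  case 0 assume "bounded_linear f" then show ?thesis using 0
    by (auto simp: smn_0 intro: bounded_linear_imp_differentiable)
next
  case (Suc m) assume l: "bounded_linear f"
  have "pd e f = (\<lambda>x. f e)" for e by (rule ext) (rule pd_linear[OF l])
  then show ?thesis using Suc l smn_const
    by (auto simp: smn_Suc smn_0 intro: bounded_linear_imp_differentiable)
qed

lemma smn_add: "open U \<Longrightarrow> smn U n f \<Longrightarrow> smn U n g \<Longrightarrow> smn U n (\<lambda>x. f x + g x)"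
proof (induction n arbitrary: f g)
  case 0 then show ?case by (auto simp: smn_0)
next
  case (Suc n)
  show ?case unfolding smn_Suc
  proof (intro conjI ballI)
    show "smn U 0 (\<lambda>x. f x + g x)" using Suc.prems smn_diff by (auto simp: smn_0)
    fix e assume e: "e \<in> B5"
    have "eqon U (\<lambda>x. pd e f x + pd e g x) (pd e (\<lambda>x. f x + g x))"
      using Suc.prems smn_diff unfolding eqon_def by (auto intro!: pd_add[symmetric])
    moreover have "smn U n (\<lambda>x. pd e f x + pd e g x)"
      using Suc e by (auto simp: smn_Suc)
    ultimately show "smn U n (pd e (\<lambda>x. f x + g x))" using smn_local Suc.prems(1) by blast
  qed
qed

lemma smn_mult: "open U \<Longrightarrow> smn U n f \<Longrightarrow> smn U n g \<Longrightarrow> smn U n (\<lambda>x. f x * g x)"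
proof (induction n arbitrary: f g)
  case 0 then show ?case by (auto simp: smn_0)
next
  case (Suc n)
  show ?case unfolding smn_Suc
  proof (intro conjI ballI)
    show "smn U 0 (\<lambda>x. f x * g x)" using Suc.prems smn_diff by (auto simp: smn_0)
    fix e assume e: "e \<in> B5"
    have "eqon U (\<lambda>x. f x * pd e g x + pd e f x * g x) (pd e (\<lambda>x. f x * g x))"
      using Suc.prems smn_diff unfolding eqon_def by (auto intro!: pd_mult[symmetric])
    moreover have "smn U n (\<lambda>x. f x * pd e g x + pd e f x * g x)"
      using Suc e smn_mono[of U "Suc n" _ n] by (intro smn_add) (auto simp: smn_Suc)
    ultimately show "smn U n (pd e (\<lambda>x. f x * g x))" using smn_local Suc.prems(1) by blast
  qed
qed

lemma smn_cnj: "open U \<Longrightarrow> smn U n f \<Longrightarrow> smn U n (\<lambda>x. cnj (f x))"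
proof (induction n arbitrary: f)
  case 0 then show ?case by (auto simp: smn_0 differentiable_cnj_iff)
next
  case (Suc n)
  show ?case unfolding smn_Suc
  proof (intro conjI ballI)
    show "smn U 0 (\<lambda>x. cnj (f x))" using Suc.prems smn_diff by (auto simp: smn_0 differentiable_cnj_iff)
    fix e assume e: "e \<in> B5"
    have "eqon U (\<lambda>x. cnj (pd e f x)) (pd e (\<lambda>x. cnj (f x)))"
      using Suc.prems smn_diff unfolding eqon_def by (auto intro!: pd_cnj[symmetric])
    moreover have "smn U n (\<lambda>x. cnj (pd e f x))"
      using Suc e by (auto simp: smn_Suc)
    ultimately show "smn U n (pd e (\<lambda>x. cnj (f x)))" using smn_local Suc.prems(1) by blast
  qed
qed

lemma smn_inverse: "open U \<Longrightarrow> smn U n f \<Longrightarrow> (\<forall>x\<in>U. f x \<noteq> 0) \<Longrightarrow> smn U n (\<lambda>x. inverse (f x))"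
proof (induction n)
  case 0 then show ?case by (auto simp: smn_0)
next
  case (Suc n)
  have ih: "smn U n (\<lambda>x. inverse (f x))" using Suc smn_mono[of U "Suc n" f n] by auto
  show ?case unfolding smn_Suc
  proof (intro conjI ballI)
    show "smn U 0 (\<lambda>x. inverse (f x))" using Suc.prems smn_diff by (auto simp: smn_0)
    fix e assume e: "e \<in> B5"
    have "eqon U (\<lambda>x. (-1) * (pd e f x * (inverse (f x) * inverse (f x)))) (pd e (\<lambda>x. inverse (f x)))"
      using Suc.prems smn_diff pd_inverse unfolding eqon_def
      by (auto simp: field_simps power2_eq_square)
    moreover have "smn U n (\<lambda>x. (-1) * (pd e f x * (inverse (f x) * inverse (f x))))"
      using Suc e ih by (intro smn_mult smn_const) (auto simp: smn_Suc)
    ultimately show "smn U n (pd e (\<lambda>x. inverse (f x)))" using smn_local Suc.prems(1) by blast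
  qed
qed

abbreviation sm :: "pt set \<Rightarrow> (pt \<Rightarrow> complex) \<Rightarrow> bool" where "sm \<equiv> smooth_on"

lemma sm_local: "open U \<Longrightarrow> eqon U f g \<Longrightarrow> sm U f \<Longrightarrow> sm U g"
  unfolding smooth_on_smn using smn_local by blast
lemma sm_const: "sm U (\<lambda>x. c)" unfolding smooth_on_smn using smn_const by blast
lemma sm_linear: "bounded_linear f \<Longrightarrow> sm U f" unfolding smooth_on_smn using smn_linear by blast
lemma sm_add: "open U \<Longrightarrow> sm U f \<Longrightarrow> sm U g \<Longrightarrow> sm U (\<lambda>x. f x + g x)"
  unfolding smooth_on_smn using smn_add by blast
lemma sm_mult: "open U \<Longrightarrow> sm U f \<Longrightarrow> sm U g \<Longrightarrow> sm U (\<lambda>x. f x * g x)"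
  unfolding smooth_on_smn using smn_mult by blast
lemma sm_cnj: "open U \<Longrightarrow> sm U f \<Longrightarrow> sm U (\<lambda>x. cnj (f x))"
  unfolding smooth_on_smn using smn_cnj by blast
lemma sm_inverse: "open U \<Longrightarrow> sm U f \<Longrightarrow> (\<forall>x\<in>U. f x \<noteq> 0) \<Longrightarrow> sm U (\<lambda>x. inverse (f x))"
  unfolding smooth_on_smn using smn_inverse by blast
lemma sm_diffble: "sm U f \<Longrightarrow> p \<in> U \<Longrightarrow> f differentiable (at p)"
  unfolding smooth_on_smn using smn_diff by blast
lemma sm_pd: "sm U f \<Longrightarrow> e \<in> B5 \<Longrightarrow> sm U (pd e f)"
  unfolding smooth_on_smn using smn_Suc by blast
lemma sm_uminus: assumes "open U" "sm U f" shows "sm U (\<lambda>x. - f x)"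
proof -
  have "sm U (\<lambda>x. (-1) * f x)" by (rule sm_mult[OF assms(1) sm_const assms(2)])
  then show ?thesis by simp
qed
lemma sm_diff: assumes "open U" "sm U f" "sm U g" shows "sm U (\<lambda>x. f x - g x)"
  using sm_add[OF assms(1,2) sm_uminus[OF assms(1,3)]] by simp
lemma sm_divide: assumes "open U" "sm U f" "sm U g" "\<forall>x\<in>U. g x \<noteq> 0" shows "sm U (\<lambda>x. f x / g x)"
  using sm_mult[OF assms(1,2) sm_inverse[OF assms(1,3,4)]] by (simp add: divide_inverse)
lemma sm_power2: assumes "open U" "sm U f" shows "sm U (\<lambda>x. (f x)^2)"
  using sm_mult[OF assms(1,2,2)] by (simp add: power2_eq_square)

lemma pd_schwarz: "open U \<Longrightarrow> sm U f \<Longrightarrow> p \<in> U \<Longrightarrow> a \<in> B5 \<Longrightarrow> b \<in> B5 \<Longrightarrow>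
   pd b (pd a f) p = pd a (pd b f) p"
  by (rule schwarz[of U]) (auto intro: sm_diffble sm_pd)

definition bs :: "nat \<Rightarrow> pt" where "bs i = [ex1, ey1, ex2, ey2, ev] ! i"

definition gf :: "(nat \<Rightarrow> pt \<Rightarrow> complex) \<Rightarrow> (pt \<Rightarrow> complex) \<Rightarrow> pt \<Rightarrow> complex" where
  "gf a h p = (\<Sum>i<5. a i p * pd (bs i) h p)"

lemma bs_B5: "i < 5 \<Longrightarrow> bs i \<in> B5"
  by (auto simp: bs_def B5_def less_Suc_eq numeral_eq_Suc)

lemma gf_expand: "gf a h p = a 0 p * pd ex1 h p + a 1 p * pd ey1 h p + a 2 p * pd ex2 h p
   + a 3 p * pd ey2 h p + a 4 p * pd ev h p"
  by (simp add: gf_def bs_def numeral_eq_Suc lessThan_Suc)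

lemma pd_sum: "finite I \<Longrightarrow> (\<forall>i\<in>I. f i differentiable (at p)) \<Longrightarrow>
  pd e (\<lambda>x. \<Sum>i\<in>I. f i x) p = (\<Sum>i\<in>I. pd e (f i) p)"
proof (induction I rule: finite_induct)
  case empty then show ?case by (simp add: pd_const)
next
  case (insert j I)
  have d: "(\<lambda>x. \<Sum>i\<in>I. f i x) differentiable (at p)"
    using insert by (intro differentiable_sum) auto
  have "pd e (\<lambda>x. \<Sum>i\<in>insert j I. f i x) p = pd e (\<lambda>x. f j x + (\<Sum>i\<in>I. f i x)) p"
    using insert by simp
  also have "\<dots> = pd e (f j) p + pd e (\<lambda>x. \<Sum>i\<in>I. f i x) p"
    using insert d by (intro pd_add) auto
  finally show ?case using insert by simp
qed

lemma gf_add: "f differentiable (at p) \<Longrightarrow> g differentiable (at p) \<Longrightarrow>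
  gf a (\<lambda>x. f x + g x) p = gf a f p + gf a g p"
  by (simp add: gf_def pd_add distrib_left sum.distrib)

lemma gf_diff: "f differentiable (at p) \<Longrightarrow> g differentiable (at p) \<Longrightarrow>
  gf a (\<lambda>x. f x - g x) p = gf a f p - gf a g p"
  by (simp add: gf_def pd_diff right_diff_distrib sum_subtractf)

lemma gf_mult: assumes "f differentiable (at p)" "g differentiable (at p)"
  shows "gf a (\<lambda>x. f x * g x) p = f p * gf a g p + gf a f p * g p"
proof -
  have "a i p * pd (bs i) (\<lambda>x. f x * g x) p = f p * (a i p * pd (bs i) g p) + (a i p * pd (bs i) f p) * g p" for i
    by (simp add: pd_mult[OF assms] distrib_left mult.left_commute mult.assoc mult.commute[of "g p"])
  then show ?thesis by (simp add: gf_def sum.distrib sum_distrib_left sum_distrib_right)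
qed

lemma gf_const: "gf a (\<lambda>x. c) p = 0"
  by (simp add: gf_def pd_const)

lemma gf_cmult: "f differentiable (at p) \<Longrightarrow> gf a (\<lambda>x. c * f x) p = c * gf a f p"
  using gf_mult[of "\<lambda>x. c" p f a] gf_const by simp

lemma gf_uminus: "f differentiable (at p) \<Longrightarrow> gf a (\<lambda>x. - f x) p = - gf a f p"
  using gf_cmult[of f p a "-1"] by simp

lemma gf_inverse: "f differentiable (at p) \<Longrightarrow> f p \<noteq> 0 \<Longrightarrow>
  gf a (\<lambda>x. inverse (f x)) p = - gf a f p / (f p)^2"
  by (simp add: gf_def pd_inverse sum_divide_distrib sum_negf)

lemma gf_divide: assumes "f differentiable (at p)" "g differentiable (at p)" "g p \<noteq> 0"
  shows "gf a (\<lambda>x. f x / g x) p = (gf a f p * g p - f p * gf a g p) / (g p)^2"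
proof -
  have "(\<lambda>x. inverse (g x)) differentiable (at p)"
    using assms by (intro differentiable_inverse)
  then have 1: "gf a (\<lambda>x. f x * inverse (g x)) p = f p * gf a (\<lambda>x. inverse (g x)) p + gf a f p * inverse (g p)"
    using assms by (intro gf_mult) auto
  have 2: "gf a (\<lambda>x. inverse (g x)) p = - gf a g p / (g p)^2" using assms by (intro gf_inverse)
  have 3: "(\<lambda>x. f x / g x) = (\<lambda>x. f x * inverse (g x))" by (simp add: divide_inverse)
  have 4: "f p * (- gf a g p / (g p)^2) + gf a f p * inverse (g p) = (gf a f p * g p - f p * gf a g p) / (g p)^2"
    using assms(3) by (simp add: power2_eq_square divide_simps)
  show ?thesis unfolding 3 1 2 4 ..
qed

lemma gf_power2: "f differentiable (at p) \<Longrightarrow> gf a (\<lambda>x. (f x)^2) p = 2 * f p * gf a f p"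
  using gf_mult[of f p f a] by (simp add: power2_eq_square)

lemma gf_local: assumes "open U" "p \<in> U" "eqon U f g" "f differentiable (at p)" shows "gf a f p = gf a g p"
proof -
  have "pd (bs i) f p = pd (bs i) g p" for i using pd_local(1)[OF assms] .
  then show ?thesis unfolding gf_def by simp
qed

lemma sm_gf: assumes "open U" "\<forall>i<5. sm U (a i)" "sm U h" shows "sm U (gf a h)"
proof -
  have "sm U (\<lambda>p. (\<Sum>i\<in>I. a i p * pd (bs i) h p))" if "I \<subseteq> {..<5}" for I
    using that
  proof (induction I rule: infinite_finite_induct)
    case (infinite A) then show ?case using finite_subset by blast
  next
    case empty then show ?case by (simp add: sm_const)
  next
    case (insert j I)
    then have j: "j < 5" by auto
    have "sm U (\<lambda>p. a j p * pd (bs j) h p + (\<Sum>i\<in>I. a i p * pd (bs i) h p))"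
      using insert j assms bs_B5 by (intro sm_add sm_mult sm_pd) auto
    then show ?case using insert by simp
  qed
  then show ?thesis unfolding gf_def[abs_def] by blast
qed

lemma gf_diffble: "open U \<Longrightarrow> \<forall>i<5. sm U (a i) \<Longrightarrow> sm U h \<Longrightarrow> p \<in> U \<Longrightarrow> gf a h differentiable (at p)"
  using sm_gf sm_diffble by blast

lemma comm_alg:
  fixes a b :: "nat \<Rightarrow> complex"
  assumes sym: "\<forall>i\<in>I. \<forall>j\<in>I. M i j = M j i"
  shows "(\<Sum>i\<in>I. a i * (\<Sum>j\<in>I. b j * M i j + B i j * H j)) - (\<Sum>i\<in>I. b i * (\<Sum>j\<in>I. a j * M i j + A i j * H j))
    = (\<Sum>j\<in>I. ((\<Sum>i\<in>I. a i * B i j) - (\<Sum>i\<in>I. b i * A i j)) * H j)"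
proof -
  have e1: "(\<Sum>i\<in>I. a i * (\<Sum>j\<in>I. b j * M i j + B i j * H j))
     = (\<Sum>i\<in>I. \<Sum>j\<in>I. a i * b j * M i j) + (\<Sum>i\<in>I. \<Sum>j\<in>I. a i * B i j * H j)"
    by (simp add: sum_distrib_left distrib_left sum.distrib mult.assoc)
  have e2: "(\<Sum>i\<in>I. b i * (\<Sum>j\<in>I. a j * M i j + A i j * H j))
     = (\<Sum>i\<in>I. \<Sum>j\<in>I. b i * a j * M i j) + (\<Sum>i\<in>I. \<Sum>j\<in>I. b i * A i j * H j)"
    by (simp add: sum_distrib_left distrib_left sum.distrib mult.assoc)
  have e3: "(\<Sum>i\<in>I. \<Sum>j\<in>I. b i * a j * M i j) = (\<Sum>j\<in>I. \<Sum>i\<in>I. b i * a j * M i j)"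
    by (rule sum.swap)
  also have "\<dots> = (\<Sum>j\<in>I. \<Sum>i\<in>I. a j * b i * M j i)"
    using sym by (intro sum.cong refl) (simp add: mult.commute)
  finally have e3': "(\<Sum>i\<in>I. \<Sum>j\<in>I. b i * a j * M i j) = (\<Sum>i\<in>I. \<Sum>j\<in>I. a i * b j * M i j)" .
  have e4: "(\<Sum>i\<in>I. \<Sum>j\<in>I. a i * B i j * H j) = (\<Sum>j\<in>I. (\<Sum>i\<in>I. a i * B i j) * H j)"
    by (subst sum.swap) (simp add: sum_distrib_right)
  have e5: "(\<Sum>i\<in>I. \<Sum>j\<in>I. b i * A i j * H j) = (\<Sum>j\<in>I. (\<Sum>i\<in>I. b i * A i j) * H j)"
    by (subst sum.swap) (simp add: sum_distrib_right)
  show ?thesis unfolding e1 e2 e3' e4 e5 by (simp add: sum_subtractf left_diff_distrib)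
qed

lemma gf_comm:
  assumes U: "open U" "p \<in> U" and a: "\<forall>i<5. sm U (a i)" and b: "\<forall>i<5. sm U (b i)" and h: "sm U h"
  shows "gf a (gf b h) p - gf b (gf a h) p = gf (\<lambda>i x. gf a (b i) x - gf b (a i) x) h p"
proof -
  have expand: "pd (bs i) (gf c h) p = (\<Sum>j<5. c j p * pd (bs i) (pd (bs j) h) p + pd (bs i) (c j) p * pd (bs j) h p)"
    if c: "\<forall>i<5. sm U (c i)" and i: "i < 5" for c i
  proof -
    have "pd (bs i) (gf c h) p = (\<Sum>j<5. pd (bs i) (\<lambda>x. c j x * pd (bs j) h x) p)"
      unfolding gf_def[abs_def] using c U h bs_B5
      by (intro pd_sum) (auto intro!: sm_diffble[of U] sm_mult[OF U(1)] sm_pd)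
    also have "\<dots> = (\<Sum>j<5. c j p * pd (bs i) (pd (bs j) h) p + pd (bs i) (c j) p * pd (bs j) h p)"
      using c U h bs_B5 by (intro sum.cong refl pd_mult) (auto intro!: sm_diffble sm_pd)
    finally show ?thesis .
  qed
  have sw: "\<forall>i\<in>{..<5}. \<forall>j\<in>{..<5}. pd (bs i) (pd (bs j) h) p = pd (bs j) (pd (bs i) h) p"
    using pd_schwarz[OF U(1) h U(2) bs_B5 bs_B5] by auto
  have L: "gf a (gf b h) p = (\<Sum>i<5. a i p * (\<Sum>j<5. b j p * pd (bs i) (pd (bs j) h) p + pd (bs i) (b j) p * pd (bs j) h p))"
    unfolding gf_def[of a] by (intro sum.cong refl) (simp add: expand[OF b])
  have R: "gf b (gf a h) p = (\<Sum>i<5. b i p * (\<Sum>j<5. a j p * pd (bs i) (pd (bs j) h) p + pd (bs i) (a j) p * pd (bs j) h p))"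
    unfolding gf_def[of b] by (intro sum.cong refl) (simp add: expand[OF a])
  have "gf (\<lambda>i x. gf a (b i) x - gf b (a i) x) h p
      = (\<Sum>j<5. ((\<Sum>i<5. a i p * pd (bs i) (b j) p) - (\<Sum>i<5. b i p * pd (bs i) (a j) p)) * pd (bs j) h p)"
    unfolding gf_def by simp
  then show ?thesis unfolding L R
    using comm_alg[OF sw, of "\<lambda>i. a i p" "\<lambda>i. b i p" "\<lambda>i j. pd (bs i) (b j) p" "\<lambda>j. pd (bs j) h p" "\<lambda>i j. pd (bs i) (a j) p"]
    by simp
qed

lemma gf_comm_simple:
  assumes U: "open U" "p \<in> U" and a: "\<forall>i<5. sm U (a i)" and b: "\<forall>i<5. sm U (b i)" and h: "sm U h"
    and ca: "\<forall>i<4. \<exists>c. a i = (\<lambda>x. c)" and cb: "\<forall>i<4. \<exists>c. b i = (\<lambda>x. c)"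
  shows "gf a (gf b h) p - gf b (gf a h) p = (gf a (b 4) p - gf b (a 4) p) * pd ev h p"
proof -
  have z: "gf a (b i) x - gf b (a i) x = 0" if "i < 4" for i x
  proof -
    have "\<exists>c. a i = (\<lambda>x. c)" using ca that by simp
    then obtain c1 where c1: "a i = (\<lambda>x. c1)" by (elim exE)
    have "\<exists>c. b i = (\<lambda>x. c)" using cb that by simp
    then obtain c2 where c2: "b i = (\<lambda>x. c2)" by (elim exE)
    show ?thesis unfolding c1 c2 gf_const by simp
  qed
  have "gf (\<lambda>i x. gf a (b i) x - gf b (a i) x) h p = (gf a (b 4) p - gf b (a 4) p) * pd ev h p"
    using gf_expand[of "\<lambda>i x. gf a (b i) x - gf b (a i) x" h p] z[of 0 p] z[of 1 p] z[of 2 p] z[of 3 p]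
    by (simp only:) simp
  then show ?thesis unfolding gf_comm[OF U a b h] .
qed

lemma gf_lincomb: "gf (\<lambda>i x. f x * a i x + b i x) h p = f p * gf a h p + gf b h p"
  unfolding gf_def by (simp add: sum_distrib_left sum.distrib distrib_right mult.assoc)

lemma cj_eta: "cj f = (\<lambda>x. cnj (f x))" by (rule ext) (simp add: cj_def)
lemma cj_cj[simp]: "cj (cj f) = f" by (rule ext) (simp add: cj_def)

definition "vz1 = (\<lambda>x::pt. fst x)"
definition "vzb1 = (\<lambda>x::pt. cnj (fst x))"
definition "vv = (\<lambda>x::pt. complex_of_real (snd (snd x)))"

lemma bl_vz1: "bounded_linear vz1" unfolding vz1_def by (rule bounded_linear_fst)
lemma bl_vzb1: "bounded_linear vzb1" unfolding vzb1_def
  using bounded_linear_compose[OF bounded_linear_cnj bounded_linear_fst] by (simp add: o_def)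
lemma bl_vv: "bounded_linear vv" unfolding vv_def
  using bounded_linear_compose[OF bounded_linear_of_real bounded_linear_compose[OF bounded_linear_snd bounded_linear_snd]]
  by (simp add: o_def)

lemma pd_vz1: "pd e vz1 p = fst e" using pd_linear[OF bl_vz1] by (simp add: vz1_def)
lemma pd_vzb1: "pd e vzb1 p = cnj (fst e)" using pd_linear[OF bl_vzb1] by (simp add: vzb1_def)
lemma pd_vv: "pd e vv p = of_real (snd (snd e))" using pd_linear[OF bl_vv] by (simp add: vv_def)

locale setting =
  fixes F :: "pt \<Rightarrow> real" and U :: "pt set"
  assumes opU: "open U" and smF: "smooth_on U (Fc F)" and ell0: "\<forall>p\<in>U. ell F p \<noteq> 0"
    and rk1: "\<forall>p\<in>U. levi_rank_one F p" and k10: "\<forall>p\<in>U. Lb1 F (kk F) p \<noteq> 0"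
begin

definition cL1 :: "nat \<Rightarrow> pt \<Rightarrow> complex" where "cL1 i = (if i = 4 then A1 F else (\<lambda>x. if i = 0 then 1/2 else if i = 1 then - \<i>/2 else 0))"
definition cL2 :: "nat \<Rightarrow> pt \<Rightarrow> complex" where "cL2 i = (if i = 4 then A2 F else (\<lambda>x. if i = 2 then 1/2 else if i = 3 then - \<i>/2 else 0))"
definition cLb1 :: "nat \<Rightarrow> pt \<Rightarrow> complex" where "cLb1 i = (if i = 4 then cj (A1 F) else (\<lambda>x. if i = 0 then 1/2 else if i = 1 then \<i>/2 else 0))"
definition cLb2 :: "nat \<Rightarrow> pt \<Rightarrow> complex" where "cLb2 i = (if i = 4 then cj (A2 F) else (\<lambda>x. if i = 2 then 1/2 else if i = 3 then \<i>/2 else 0))"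
definition cT :: "nat \<Rightarrow> pt \<Rightarrow> complex" where "cT i = (\<lambda>x::pt. if i = 4 then (1::complex) else 0)"
definition cKb :: "nat \<Rightarrow> pt \<Rightarrow> complex" where "cKb i = (\<lambda>x. cnj (kk F x) * cLb1 i x + cLb2 i x)"
definition cK :: "nat \<Rightarrow> pt \<Rightarrow> complex" where "cK i = (\<lambda>x. kk F x * cL1 i x + cL2 i x)"

definition "KK g p = kk F p * L1 F g p + L2 F g p"

lemma eqL1: "L1 F = gf cL1"
  by (intro ext) (simp add: L1_def dz1_def dv_def gf_expand cL1_def diff_divide_distrib)
lemma eqL2: "L2 F = gf cL2"
  by (intro ext) (simp add: L2_def dz2_def dv_def gf_expand cL2_def diff_divide_distrib)
lemma eqLb1: "Lb1 F = gf cLb1"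
  by (intro ext) (simp add: Lb1_def dzb1_def dv_def gf_expand cLb1_def add_divide_distrib cj_def)
lemma eqLb2: "Lb2 F = gf cLb2"
  by (intro ext) (simp add: Lb2_def dzb2_def dv_def gf_expand cLb2_def add_divide_distrib cj_def)
lemma eqT: "dv = gf cT"
  by (intro ext) (simp add: dv_def gf_expand cT_def)
lemma eqKb: "Kb F = gf cKb"
  unfolding cKb_def gf_lincomb by (intro ext) (simp add: Kb_def eqLb1 eqLb2)
lemma eqK: "KK = gf cK"
  unfolding cK_def gf_lincomb by (intro ext) (simp add: KK_def eqL1 eqL2)


lemma B5_mem[simp]: "ex1 \<in> B5" "ey1 \<in> B5" "ex2 \<in> B5" "ey2 \<in> B5" "ev \<in> B5"
  by (auto simp: B5_def)

lemma smFc: "sm U (Fc F)" using smF .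

lemma cjFc: "cj (Fc F) = Fc F" by (rule ext) (simp add: cj_def Fc_def)

lemma pdFc_real: assumes "p \<in> U" shows "cnj (pd e (Fc F) p) = pd e (Fc F) p"
proof -
  have "pd e (\<lambda>x. cnj (Fc F x)) p = cnj (pd e (Fc F) p)"
    using sm_diffble[OF smFc assms] by (rule pd_cnj)
  moreover have "(\<lambda>x. cnj (Fc F x)) = Fc F" using cjFc by (simp add: cj_eta)
  ultimately show ?thesis by simp
qed

lemma Im_pdFc: "p \<in> U \<Longrightarrow> Im (pd e (Fc F) p) = 0"
  using pdFc_real[of p e] by (metis Reals_cnj_iff complex_is_Real_iff)

lemma den_nz: "p \<in> U \<Longrightarrow> 1 + \<i> * dv (Fc F) p \<noteq> 0"
proof
  assume p: "p \<in> U" and h: "1 + \<i> * dv (Fc F) p = 0"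
  have "Re (1 + \<i> * dv (Fc F) p) = 1" using Im_pdFc[OF p, of ev] by (simp add: dv_def)
  then show False using h by simp
qed

lemma den_nz2: "p \<in> U \<Longrightarrow> dv (Fc F) p + \<i> \<noteq> 0"
proof
  assume p: "p \<in> U" and h: "dv (Fc F) p + \<i> = 0"
  have "Im (dv (Fc F) p + \<i>) = 1" using Im_pdFc[OF p, of ev] by (simp add: dv_def)
  then show False using h by simp
qed

lemma sm_dz1: "sm U f \<Longrightarrow> sm U (dz1 f)" unfolding dz1_def[abs_def]
  using opU by (intro sm_divide sm_diff sm_mult sm_const sm_pd) auto
lemma sm_dz2: "sm U f \<Longrightarrow> sm U (dz2 f)" unfolding dz2_def[abs_def]
  using opU by (intro sm_divide sm_diff sm_mult sm_const sm_pd) auto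
lemma sm_dzb1: "sm U f \<Longrightarrow> sm U (dzb1 f)" unfolding dzb1_def[abs_def]
  using opU by (intro sm_divide sm_add sm_mult sm_const sm_pd) auto
lemma sm_dzb2: "sm U f \<Longrightarrow> sm U (dzb2 f)" unfolding dzb2_def[abs_def]
  using opU by (intro sm_divide sm_add sm_mult sm_const sm_pd) auto
lemma sm_dv: "sm U f \<Longrightarrow> sm U (dv f)" unfolding dv_def[abs_def]
  by (intro sm_pd) auto

lemma smA1: "sm U (A1 F)" unfolding A1_def[abs_def]
  using opU den_nz by (intro sm_divide sm_add sm_mult sm_const sm_dz1 sm_dv smFc) auto
lemma smA2: "sm U (A2 F)" unfolding A2_def[abs_def]
  using opU den_nz by (intro sm_divide sm_add sm_mult sm_const sm_dz2 sm_dv smFc) auto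
lemma sm_cj: "sm U f \<Longrightarrow> sm U (cj f)" unfolding cj_eta using opU by (rule sm_cnj)
lemma smA1b: "sm U (cj (A1 F))" by (rule sm_cj[OF smA1])
lemma smA2b: "sm U (cj (A2 F))" by (rule sm_cj[OF smA2])

lemma sm_cL1: "\<forall>i<5. sm U (cL1 i)" by (simp add: cL1_def smA1 sm_const)
lemma sm_cL2: "\<forall>i<5. sm U (cL2 i)" by (simp add: cL2_def smA2 sm_const)
lemma sm_cLb1: "\<forall>i<5. sm U (cLb1 i)" by (simp add: cLb1_def smA1b sm_const)
lemma sm_cLb2: "\<forall>i<5. sm U (cLb2 i)" by (simp add: cLb2_def smA2b sm_const)
lemma sm_cT: "\<forall>i<5. sm U (cT i)" by (simp add: cT_def sm_const)

lemma c_cL1: "\<forall>i<4. \<exists>c. cL1 i = (\<lambda>x. c)" by (auto simp: cL1_def intro!: exI)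
lemma c_cL2: "\<forall>i<4. \<exists>c. cL2 i = (\<lambda>x. c)" by (auto simp: cL2_def intro!: exI)
lemma c_cLb1: "\<forall>i<4. \<exists>c. cLb1 i = (\<lambda>x. c)" by (auto simp: cLb1_def intro!: exI)
lemma c_cLb2: "\<forall>i<4. \<exists>c. cLb2 i = (\<lambda>x. c)" by (auto simp: cLb2_def intro!: exI)
lemma c_cT: "\<forall>i<4. \<exists>c. cT i = (\<lambda>x. c)" by (auto simp: cT_def intro!: exI)

lemma smL1: "sm U h \<Longrightarrow> sm U (L1 F h)" unfolding eqL1 using opU sm_cL1 by (rule sm_gf)
lemma smL2: "sm U h \<Longrightarrow> sm U (L2 F h)" unfolding eqL2 using opU sm_cL2 by (rule sm_gf)
lemma smLb1: "sm U h \<Longrightarrow> sm U (Lb1 F h)" unfolding eqLb1 using opU sm_cLb1 by (rule sm_gf)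
lemma smLb2: "sm U h \<Longrightarrow> sm U (Lb2 F h)" unfolding eqLb2 using opU sm_cLb2 by (rule sm_gf)

definition "l11 x = L1 F (cj (A1 F)) x - Lb1 F (A1 F) x"
definition "l12 x = L1 F (cj (A2 F)) x - Lb2 F (A1 F) x"
definition "l21 x = L2 F (cj (A1 F)) x - Lb1 F (A2 F) x"
definition "l22 x = L2 F (cj (A2 F)) x - Lb2 F (A2 F) x"

lemma sm_l11: "sm U l11" unfolding l11_def[abs_def] using opU
  by (intro sm_diff smL1 smLb1 smA1 smA2 smA1b smA2b)
lemma sm_l12: "sm U l12" unfolding l12_def[abs_def] using opU
  by (intro sm_diff smL1 smLb2 smA1 smA2 smA1b smA2b)
lemma sm_l21: "sm U l21" unfolding l21_def[abs_def] using opU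
  by (intro sm_diff smL2 smLb1 smA1 smA2 smA1b smA2b)
lemma sm_l22: "sm U l22" unfolding l22_def[abs_def] using opU
  by (intro sm_diff smL2 smLb2 smA1 smA2 smA1b smA2b)

lemma ell_eq: "ell F x = \<i> * l11 x" by (simp add: ell_def l11_def)
lemma l11_nz: "p \<in> U \<Longrightarrow> l11 p \<noteq> 0" using ell0 ell_eq by auto
lemma kk_eq: "kk F = (\<lambda>x. - l21 x / l11 x)" by (rule ext) (simp add: kk_def l21_def l11_def)
lemma rank1: "p \<in> U \<Longrightarrow> l11 p * l22 p - l12 p * l21 p = 0"
  using rk1 by (simp add: levi_rank_one_def levi_def l11_def l12_def l21_def l22_def)

lemma sm_kk: "sm U (kk F)" unfolding kk_eq using opU l11_nz
  by (intro sm_divide sm_uminus sm_l21 sm_l11) auto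
lemma sm_kkb: "sm U (cj (kk F))" by (rule sm_cj[OF sm_kk])

lemma sm_cKb: "\<forall>i<5. sm U (cKb i)" unfolding cKb_def using opU sm_cLb1 sm_cLb2 sm_kkb
  by (auto intro!: sm_add sm_mult simp: cj_eta)
lemma sm_cK: "\<forall>i<5. sm U (cK i)" unfolding cK_def using opU sm_cL1 sm_cL2 sm_kk
  by (auto intro!: sm_add sm_mult)
lemma smKb: "sm U h \<Longrightarrow> sm U (Kb F h)" unfolding eqKb using opU sm_cKb by (rule sm_gf)
lemma smK: "sm U h \<Longrightarrow> sm U (KK h)" unfolding eqK using opU sm_cK by (rule sm_gf)
lemma smT: "sm U h \<Longrightarrow> sm U (dv h)" by (rule sm_dv)


lemma cnj_L1: "h differentiable (at p) \<Longrightarrow> cnj (L1 F h p) = Lb1 F (cj h) p"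
  by (simp add: L1_def Lb1_def dz1_def dzb1_def dv_def cj_eta pd_cnj)
lemma cnj_L2: "h differentiable (at p) \<Longrightarrow> cnj (L2 F h p) = Lb2 F (cj h) p"
  by (simp add: L2_def Lb2_def dz2_def dzb2_def dv_def cj_eta pd_cnj)
lemma cnj_Lb1: "h differentiable (at p) \<Longrightarrow> cnj (Lb1 F h p) = L1 F (cj h) p"
  by (simp add: L1_def Lb1_def dz1_def dzb1_def dv_def cj_eta pd_cnj)
lemma cnj_Lb2: "h differentiable (at p) \<Longrightarrow> cnj (Lb2 F h p) = L2 F (cj h) p"
  by (simp add: L2_def Lb2_def dz2_def dzb2_def dv_def cj_eta pd_cnj)
lemma cnj_dv: "h differentiable (at p) \<Longrightarrow> cnj (dv h p) = dv (cj h) p"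
  by (simp add: dv_def cj_eta pd_cnj)

lemma l11_herm: "p \<in> U \<Longrightarrow> cnj (l11 p) = - l11 p"
  using sm_diffble[OF smA1] sm_diffble[OF smA1b]
  by (simp add: l11_def cnj_L1 cnj_Lb1)
lemma l21_herm: "p \<in> U \<Longrightarrow> cnj (l21 p) = - l12 p"
  using sm_diffble[OF smA2] sm_diffble[OF smA1b]
  by (simp add: l21_def l12_def cnj_L2 cnj_Lb1)
lemma kkb_eq: "p \<in> U \<Longrightarrow> cnj (kk F p) = - l12 p / l11 p"
  using l11_herm l21_herm by (simp add: kk_eq)

lemma op_const[simp]: "L1 F (\<lambda>x. c) p = 0" "L2 F (\<lambda>x. c) p = 0" "Lb1 F (\<lambda>x. c) p = 0"
  "Lb2 F (\<lambda>x. c) p = 0" "Kb F (\<lambda>x. c) p = 0" "KK (\<lambda>x. c) p = 0" "dv (\<lambda>x. c) p = 0"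
  by (simp_all add: eqL1 eqL2 eqLb1 eqLb2 eqKb eqK eqT gf_const)

lemma comm_L1_Lb1: assumes "sm U h" "p \<in> U"
  shows "L1 F (Lb1 F h) p - Lb1 F (L1 F h) p = l11 p * dv h p"
proof -
  have "gf cL1 (gf cLb1 h) p - gf cLb1 (gf cL1 h) p = (gf cL1 (cLb1 4) p - gf cLb1 (cL1 4) p) * pd ev h p"
    by (rule gf_comm_simple[OF opU assms(2) sm_cL1 sm_cLb1 assms(1) c_cL1 c_cLb1])
  then show ?thesis by (simp add: eqL1[symmetric] eqLb1[symmetric] l11_def cL1_def cLb1_def dv_def)
qed
lemma comm_L1_Lb2: assumes "sm U h" "p \<in> U"
  shows "L1 F (Lb2 F h) p - Lb2 F (L1 F h) p = l12 p * dv h p"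
proof -
  have "gf cL1 (gf cLb2 h) p - gf cLb2 (gf cL1 h) p = (gf cL1 (cLb2 4) p - gf cLb2 (cL1 4) p) * pd ev h p"
    by (rule gf_comm_simple[OF opU assms(2) sm_cL1 sm_cLb2 assms(1) c_cL1 c_cLb2])
  then show ?thesis by (simp add: eqL1[symmetric] eqLb2[symmetric] l12_def cL1_def cLb2_def dv_def)
qed
lemma comm_L2_Lb1: assumes "sm U h" "p \<in> U"
  shows "L2 F (Lb1 F h) p - Lb1 F (L2 F h) p = l21 p * dv h p"
proof -
  have "gf cL2 (gf cLb1 h) p - gf cLb1 (gf cL2 h) p = (gf cL2 (cLb1 4) p - gf cLb1 (cL2 4) p) * pd ev h p"
    by (rule gf_comm_simple[OF opU assms(2) sm_cL2 sm_cLb1 assms(1) c_cL2 c_cLb1])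
  then show ?thesis by (simp add: eqL2[symmetric] eqLb1[symmetric] l21_def cL2_def cLb1_def dv_def)
qed
lemma comm_L2_Lb2: assumes "sm U h" "p \<in> U"
  shows "L2 F (Lb2 F h) p - Lb2 F (L2 F h) p = l22 p * dv h p"
proof -
  have "gf cL2 (gf cLb2 h) p - gf cLb2 (gf cL2 h) p = (gf cL2 (cLb2 4) p - gf cLb2 (cL2 4) p) * pd ev h p"
    by (rule gf_comm_simple[OF opU assms(2) sm_cL2 sm_cLb2 assms(1) c_cL2 c_cLb2])
  then show ?thesis by (simp add: eqL2[symmetric] eqLb2[symmetric] l22_def cL2_def cLb2_def dv_def)
qed
lemma comm_Lb1_Lb2_raw: assumes "sm U h" "p \<in> U"
  shows "Lb1 F (Lb2 F h) p - Lb2 F (Lb1 F h) p = (Lb1 F (cj (A2 F)) p - Lb2 F (cj (A1 F)) p) * dv h p"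
proof -
  have "gf cLb1 (gf cLb2 h) p - gf cLb2 (gf cLb1 h) p = (gf cLb1 (cLb2 4) p - gf cLb2 (cLb1 4) p) * pd ev h p"
    by (rule gf_comm_simple[OF opU assms(2) sm_cLb1 sm_cLb2 assms(1) c_cLb1 c_cLb2])
  then show ?thesis by (simp add: eqLb1[symmetric] eqLb2[symmetric] cLb1_def cLb2_def dv_def)
qed
lemma comm_T_Lb1: assumes "sm U h" "p \<in> U"
  shows "dv (Lb1 F h) p - Lb1 F (dv h) p = dv (cj (A1 F)) p * dv h p"
proof -
  have "gf cT (gf cLb1 h) p - gf cLb1 (gf cT h) p = (gf cT (cLb1 4) p - gf cLb1 (cT 4) p) * pd ev h p"
    by (rule gf_comm_simple[OF opU assms(2) sm_cT sm_cLb1 assms(1) c_cT c_cLb1])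
  moreover have "cT 4 = (\<lambda>x. 1)" by (simp add: cT_def)
  ultimately show ?thesis by (simp add: eqT[symmetric] eqLb1[symmetric] cLb1_def dv_def gf_const)
qed
lemma comm_T_Lb2: assumes "sm U h" "p \<in> U"
  shows "dv (Lb2 F h) p - Lb2 F (dv h) p = dv (cj (A2 F)) p * dv h p"
proof -
  have "gf cT (gf cLb2 h) p - gf cLb2 (gf cT h) p = (gf cT (cLb2 4) p - gf cLb2 (cT 4) p) * pd ev h p"
    by (rule gf_comm_simple[OF opU assms(2) sm_cT sm_cLb2 assms(1) c_cT c_cLb2])
  moreover have "cT 4 = (\<lambda>x. 1)" by (simp add: cT_def)
  ultimately show ?thesis by (simp add: eqT[symmetric] eqLb2[symmetric] cLb2_def dv_def gf_const)
qed


definition "Wb = (\<lambda>x. Fc F x + \<i> * vv x)"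

lemma sm_vv: "sm U vv" by (rule sm_linear[OF bl_vv])
lemma sm_Wb: "sm U Wb" unfolding Wb_def using opU by (intro sm_add sm_mult smFc sm_const sm_vv)

lemma pd_Wb: "p \<in> U \<Longrightarrow> pd e Wb p = pd e (Fc F) p + \<i> * of_real (snd (snd e))"
  unfolding Wb_def using sm_diffble[OF smFc] sm_diffble[OF sm_vv]
  by (simp add: pd_add pd_mult pd_const pd_vv differentiable_mult)

lemma dv_Fc_real: "p \<in> U \<Longrightarrow> cnj (dv (Fc F) p) = dv (Fc F) p"
  by (simp add: dv_def pdFc_real)

lemma den_nz': "p \<in> U \<Longrightarrow> 1 - \<i> * dv (Fc F) p \<noteq> 0"
proof
  assume p: "p \<in> U" and h: "1 - \<i> * dv (Fc F) p = 0"
  have "Re (1 - \<i> * dv (Fc F) p) = 1" using Im_pdFc[OF p, of ev] by (simp add: dv_def)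
  then show False using h by simp
qed

lemma Lb1_Wb: assumes p: "p \<in> U" shows "Lb1 F Wb p = 0"
proof -
  define X where "X = dzb1 (Fc F) p"
  define r where "r = dv (Fc F) p"
  have 1: "dzb1 Wb p = X" by (simp add: X_def dzb1_def pd_Wb[OF p] ex1_def ey1_def)
  have 2: "dv Wb p = r + \<i>" by (simp add: r_def dv_def pd_Wb[OF p] ev_def)
  have cX: "cnj (dz1 (Fc F) p) = X" by (simp add: X_def dz1_def dzb1_def pdFc_real[OF p])
  have cr: "cnj r = r" using dv_Fc_real[OF p] by (simp add: r_def)
  have 3: "cnj (A1 F p) = \<i> * X / (1 - \<i> * r)"
    using cX cr by (simp add: A1_def r_def)
  have nz: "1 - \<i> * r \<noteq> 0" using den_nz'[OF p] by (simp add: r_def)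
  show ?thesis unfolding Lb1_def 1 2 3 using nz by (simp add: field_simps)
qed

lemma Lb2_Wb: assumes p: "p \<in> U" shows "Lb2 F Wb p = 0"
proof -
  define X where "X = dzb2 (Fc F) p"
  define r where "r = dv (Fc F) p"
  have 1: "dzb2 Wb p = X" by (simp add: X_def dzb2_def pd_Wb[OF p] ex2_def ey2_def)
  have 2: "dv Wb p = r + \<i>" by (simp add: r_def dv_def pd_Wb[OF p] ev_def)
  have cX: "cnj (dz2 (Fc F) p) = X" by (simp add: X_def dz2_def dzb2_def pdFc_real[OF p])
  have cr: "cnj r = r" using dv_Fc_real[OF p] by (simp add: r_def)
  have 3: "cnj (A2 F p) = \<i> * X / (1 - \<i> * r)"
    using cX cr by (simp add: A2_def r_def)
  have nz: "1 - \<i> * r \<noteq> 0" using den_nz'[OF p] by (simp add: r_def)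
  show ?thesis unfolding Lb2_def 1 2 3 using nz by (simp add: field_simps)
qed

lemma dv_Wb: "p \<in> U \<Longrightarrow> dv Wb p = dv (Fc F) p + \<i>"
  by (simp add: dv_def pd_Wb ev_def)

lemma Lb12_sym: assumes p: "p \<in> U" shows "Lb1 F (cj (A2 F)) p = Lb2 F (cj (A1 F)) p"
proof -
  have e2: "eqon U (Lb2 F Wb) (\<lambda>x. 0)" using Lb2_Wb by (simp add: eqon_def)
  have e1: "eqon U (Lb1 F Wb) (\<lambda>x. 0)" using Lb1_Wb by (simp add: eqon_def)
  have "Lb1 F (Lb2 F Wb) p = Lb1 F (\<lambda>x. 0) p"
    unfolding eqLb1 by (rule gf_local[OF opU p e2 sm_diffble[OF smLb2[OF sm_Wb] p]])
  moreover have "Lb2 F (Lb1 F Wb) p = Lb2 F (\<lambda>x. 0) p"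
    unfolding eqLb2 by (rule gf_local[OF opU p e1 sm_diffble[OF smLb1[OF sm_Wb] p]])
  ultimately have "(Lb1 F (cj (A2 F)) p - Lb2 F (cj (A1 F)) p) * dv Wb p = 0"
    using comm_Lb1_Lb2_raw[OF sm_Wb p] by simp
  moreover have "dv Wb p \<noteq> 0" using dv_Wb[OF p] den_nz2[OF p] by simp
  ultimately show ?thesis by simp
qed

lemma comm_Lb1_Lb2: "sm U h \<Longrightarrow> p \<in> U \<Longrightarrow> Lb1 F (Lb2 F h) p - Lb2 F (Lb1 F h) p = 0"
  using comm_Lb1_Lb2_raw Lb12_sym by simp

end

lemma opa: "X = gf c \<Longrightarrow> f differentiable (at p) \<Longrightarrow> g differentiable (at p) \<Longrightarrow>
  X (\<lambda>x. f x + g x) p = X f p + X g p" by (simp add: gf_add)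
lemma opd: "X = gf c \<Longrightarrow> f differentiable (at p) \<Longrightarrow> g differentiable (at p) \<Longrightarrow>
  X (\<lambda>x. f x - g x) p = X f p - X g p" by (simp add: gf_diff)
lemma opm: "X = gf c \<Longrightarrow> f differentiable (at p) \<Longrightarrow> g differentiable (at p) \<Longrightarrow>
  X (\<lambda>x. f x * g x) p = f p * X g p + X f p * g p" by (simp add: gf_mult)
lemma opu: "X = gf c \<Longrightarrow> f differentiable (at p) \<Longrightarrow> X (\<lambda>x. - f x) p = - X f p" by (simp add: gf_uminus)
lemma opc: "X = gf c \<Longrightarrow> f differentiable (at p) \<Longrightarrow> X (\<lambda>x. d * f x) p = d * X f p" by (simp add: gf_cmult)
lemma opdiv: "X = gf c \<Longrightarrow> f differentiable (at p) \<Longrightarrow> g differentiable (at p) \<Longrightarrow> g p \<noteq> 0 \<Longrightarrow>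
  X (\<lambda>x. f x / g x) p = (X f p * g p - f p * X g p) / (g p)^2" by (simp add: gf_divide)
lemma opp: "X = gf c \<Longrightarrow> f differentiable (at p) \<Longrightarrow> X (\<lambda>x. (f x)^2) p = 2 * f p * X f p" by (simp add: gf_power2)
lemma opl: "X = gf c \<Longrightarrow> open U \<Longrightarrow> p \<in> U \<Longrightarrow> eqon U f g \<Longrightarrow> f differentiable (at p) \<Longrightarrow> X f p = X g p"
  using gf_local by blast
lemma opmadd: "X = gf c \<Longrightarrow> f differentiable (at p) \<Longrightarrow> g differentiable (at p) \<Longrightarrow> h differentiable (at p) \<Longrightarrow>
  X (\<lambda>x. f x * g x + h x) p = f p * X g p + X f p * g p + X h p"
  by (simp add: gf_add gf_mult differentiable_mult)

context setting begin

lemma KbX: "Kb F h = (\<lambda>x. cj (kk F) x * Lb1 F h x + Lb2 F h x)"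
  by (rule ext) (simp add: Kb_def cj_def)
lemma KX: "KK h = (\<lambda>x. kk F x * L1 F h x + L2 F h x)"
  by (rule ext) (simp add: KK_def)

lemma dfb: "sm U f \<Longrightarrow> p \<in> U \<Longrightarrow> f differentiable (at p)" by (rule sm_diffble)

definition "aa = Lb1 F (cj (kk F))"
lemma sm_aa: "sm U aa" unfolding aa_def by (intro smLb1 sm_kkb)

lemma D1: assumes h: "sm U h" and p: "p \<in> U"
  shows "Kb F (Lb1 F h) p - Lb1 F (Kb F h) p = - aa p * Lb1 F h p"
proof -
  have "Lb1 F (Kb F h) p = cj (kk F) p * Lb1 F (Lb1 F h) p + Lb1 F (cj (kk F)) p * Lb1 F h p + Lb1 F (Lb2 F h) p"
    unfolding KbX by (intro opmadd[OF eqLb1] dfb[OF _ p] sm_kkb smLb1 smLb2 h)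
  moreover have "Kb F (Lb1 F h) p = cj (kk F) p * Lb1 F (Lb1 F h) p + Lb2 F (Lb1 F h) p"
    by (simp add: KbX)
  moreover have "Lb1 F (Lb2 F h) p - Lb2 F (Lb1 F h) p = 0" by (rule comm_Lb1_Lb2[OF h p])
  ultimately show ?thesis by (simp add: aa_def algebra_simps)
qed


lemma C11: "sm U h \<Longrightarrow> p \<in> U \<Longrightarrow> L1 F (Lb1 F h) p = Lb1 F (L1 F h) p + l11 p * dv h p"
  using comm_L1_Lb1 by (simp add: diff_eq_eq)
lemma C12: "sm U h \<Longrightarrow> p \<in> U \<Longrightarrow> L1 F (Lb2 F h) p = Lb2 F (L1 F h) p + l12 p * dv h p"
  using comm_L1_Lb2 by (simp add: diff_eq_eq)
lemma C21: "sm U h \<Longrightarrow> p \<in> U \<Longrightarrow> L2 F (Lb1 F h) p = Lb1 F (L2 F h) p + l21 p * dv h p"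
  using comm_L2_Lb1 by (simp add: diff_eq_eq)
lemma C22: "sm U h \<Longrightarrow> p \<in> U \<Longrightarrow> L2 F (Lb2 F h) p = Lb2 F (L2 F h) p + l22 p * dv h p"
  using comm_L2_Lb2 by (simp add: diff_eq_eq)
lemma CT1: "sm U h \<Longrightarrow> p \<in> U \<Longrightarrow> dv (Lb1 F h) p = Lb1 F (dv h) p + dv (cj (A1 F)) p * dv h p"
  using comm_T_Lb1 by (simp add: diff_eq_eq)
lemma CT2: "sm U h \<Longrightarrow> p \<in> U \<Longrightarrow> dv (Lb2 F h) p = Lb2 F (dv h) p + dv (cj (A2 F)) p * dv h p"
  using comm_T_Lb2 by (simp add: diff_eq_eq)

lemma rel1: "p \<in> U \<Longrightarrow> cj (kk F) p * l11 p + l12 p = 0"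
  using kkb_eq l11_nz by (simp add: cj_def field_simps)
lemma rel2: "p \<in> U \<Longrightarrow> cj (kk F) p * l21 p + l22 p = 0"
proof -
  assume p: "p \<in> U"
  have k: "cj (kk F) p = - l12 p / l11 p" using kkb_eq[OF p] by (simp add: cj_def)
  have "cj (kk F) p * l21 p + l22 p = (l11 p * l22 p - l12 p * l21 p) / l11 p"
    unfolding k using l11_nz[OF p] by (simp add: field_simps)
  then show ?thesis using rank1[OF p] by simp
qed
lemma rel3: "p \<in> U \<Longrightarrow> kk F p * l11 p + l21 p = 0"
  using l11_nz by (simp add: kk_eq field_simps)

lemma D2: assumes h: "sm U h" and p: "p \<in> U"
  shows "Kb F (L1 F h) p - L1 F (Kb F h) p = - L1 F (cj (kk F)) p * Lb1 F h p"
proof -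
  have X1: "L1 F (Kb F h) p = cj (kk F) p * L1 F (Lb1 F h) p + L1 F (cj (kk F)) p * Lb1 F h p + L1 F (Lb2 F h) p"
    unfolding KbX by (intro opmadd[OF eqL1] dfb[OF _ p] sm_kkb smLb1 smLb2 h)
  have X2: "Kb F (L1 F h) p = cj (kk F) p * Lb1 F (L1 F h) p + Lb2 F (L1 F h) p"
    by (simp add: KbX)
  have "Kb F (L1 F h) p - L1 F (Kb F h) p = - (cj (kk F) p * l11 p + l12 p) * dv h p - L1 F (cj (kk F)) p * Lb1 F h p"
    unfolding X1 X2 C11[OF h p] C12[OF h p] by (simp add: algebra_simps)
  then show ?thesis using rel1[OF p] by simp
qed

lemma D3: assumes h: "sm U h" and p: "p \<in> U"
  shows "Kb F (L2 F h) p - L2 F (Kb F h) p = - L2 F (cj (kk F)) p * Lb1 F h p"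
proof -
  have X1: "L2 F (Kb F h) p = cj (kk F) p * L2 F (Lb1 F h) p + L2 F (cj (kk F)) p * Lb1 F h p + L2 F (Lb2 F h) p"
    unfolding KbX by (intro opmadd[OF eqL2] dfb[OF _ p] sm_kkb smLb1 smLb2 h)
  have X2: "Kb F (L2 F h) p = cj (kk F) p * Lb1 F (L2 F h) p + Lb2 F (L2 F h) p"
    by (simp add: KbX)
  have "Kb F (L2 F h) p - L2 F (Kb F h) p = - (cj (kk F) p * l21 p + l22 p) * dv h p - L2 F (cj (kk F)) p * Lb1 F h p"
    unfolding X1 X2 C21[OF h p] C22[OF h p] by (simp add: algebra_simps)
  then show ?thesis using rel2[OF p] by simp
qed

lemma D5: assumes h: "sm U h" and p: "p \<in> U"
  shows "KK (Lb1 F h) p - Lb1 F (KK h) p = - Lb1 F (kk F) p * L1 F h p"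
proof -
  have X1: "Lb1 F (KK h) p = kk F p * Lb1 F (L1 F h) p + Lb1 F (kk F) p * L1 F h p + Lb1 F (L2 F h) p"
    unfolding KX by (intro opmadd[OF eqLb1] dfb[OF _ p] sm_kk smL1 smL2 h)
  have X2: "KK (Lb1 F h) p = kk F p * L1 F (Lb1 F h) p + L2 F (Lb1 F h) p"
    by (simp add: KX)
  have "KK (Lb1 F h) p - Lb1 F (KK h) p = (kk F p * l11 p + l21 p) * dv h p - Lb1 F (kk F) p * L1 F h p"
    unfolding X1 X2 C11[OF h p] C21[OF h p] by (simp add: algebra_simps)
  then show ?thesis using rel3[OF p] by simp
qed

lemma D4: assumes h: "sm U h" and p: "p \<in> U"
  shows "Kb F (KK h) p - KK (Kb F h) p = Kb F (kk F) p * L1 F h p - KK (cj (kk F)) p * Lb1 F h p"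
proof -
  have X1: "Kb F (KK h) p = kk F p * Kb F (L1 F h) p + Kb F (kk F) p * L1 F h p + Kb F (L2 F h) p"
    unfolding KX by (intro opmadd[OF eqKb] dfb[OF _ p] sm_kk smL1 smL2 h)
  have X2: "KK (Kb F h) p = kk F p * L1 F (Kb F h) p + L2 F (Kb F h) p"
    by (simp add: KX)
  have X3: "KK (cj (kk F)) p = kk F p * L1 F (cj (kk F)) p + L2 F (cj (kk F)) p"
    by (simp add: KX)
  have "Kb F (KK h) p - KK (Kb F h) p = kk F p * (Kb F (L1 F h) p - L1 F (Kb F h) p)
     + (Kb F (L2 F h) p - L2 F (Kb F h) p) + Kb F (kk F) p * L1 F h p"
    unfolding X1 X2 by (simp add: algebra_simps)
  also have "\<dots> = Kb F (kk F) p * L1 F h p - KK (cj (kk F)) p * Lb1 F h p"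
    unfolding D2[OF h p] D3[OF h p] X3 by (simp add: algebra_simps)
  finally show ?thesis .
qed

lemma D6: assumes h: "sm U h" and p: "p \<in> U"
  shows "dv (Kb F h) p - Kb F (dv h) p = dv (cj (kk F)) p * Lb1 F h p
     + (cj (kk F) p * dv (cj (A1 F)) p + dv (cj (A2 F)) p) * dv h p"
proof -
  have X1: "dv (Kb F h) p = cj (kk F) p * dv (Lb1 F h) p + dv (cj (kk F)) p * Lb1 F h p + dv (Lb2 F h) p"
    unfolding KbX by (intro opmadd[OF eqT] dfb[OF _ p] sm_kkb smLb1 smLb2 h)
  have X2: "Kb F (dv h) p = cj (kk F) p * Lb1 F (dv h) p + Lb2 F (dv h) p"
    by (simp add: KbX)
  show ?thesis unfolding X1 X2 CT1[OF h p] CT2[OF h p] by (simp add: algebra_simps)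
qed


lemma sm_vz1: "sm U vz1" by (rule sm_linear[OF bl_vz1])
lemma sm_vzb1: "sm U vzb1" by (rule sm_linear[OF bl_vzb1])

lemma tv: "L1 F vz1 p = 1" "Lb1 F vz1 p = 0" "dv vz1 p = 0"
  "L1 F vzb1 p = 0" "Lb1 F vzb1 p = 1" "dv vzb1 p = 0"
  "L1 F vv p = A1 F p" "Lb1 F vv p = cnj (A1 F p)" "dv vv p = 1"
  by (simp_all add: L1_def Lb1_def dz1_def dzb1_def dv_def pd_vz1 pd_vzb1 pd_vv ex1_def ey1_def ev_def)

definition "bet = Kb F (kk F)"
definition "gg = KK (cj (kk F))"
definition "zk = Lb1 F (kk F)"
lemma sm_bet: "sm U bet" unfolding bet_def by (intro smKb sm_kk)
lemma sm_gg: "sm U gg" unfolding gg_def by (intro smK sm_kkb)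
lemma sm_zk: "sm U zk" unfolding zk_def by (intro smLb1 sm_kk)

lemma Jac1: assumes h: "sm U h" and p: "p \<in> U"
  shows "bet p * l11 p * dv h p + (- Lb1 F bet p + Kb F zk p + aa p * zk p) * L1 F h p
     + (Lb1 F gg p - zk p * L1 F (cj (kk F)) p - KK aa p) * Lb1 F h p = 0"
proof -
  note sms = h smL1 smL2 smLb1 smLb2 smKb smK
  let ?A = "Kb F (KK (Lb1 F h)) p" and ?B = "KK (Kb F (Lb1 F h)) p" and ?C = "Lb1 F (Kb F (KK h)) p"
  let ?D = "Lb1 F (KK (Kb F h)) p" and ?E = "KK (Lb1 F (Kb F h)) p" and ?G = "Kb F (Lb1 F (KK h)) p"
  have AB: "?A - ?B = bet p * L1 F (Lb1 F h) p - gg p * Lb1 F (Lb1 F h) p"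
    using D4[OF smLb1[OF h] p] by (simp add: bet_def gg_def)
  have "?C - ?D = Lb1 F (\<lambda>x. Kb F (KK h) x - KK (Kb F h) x) p"
    by (rule opd[OF eqLb1, symmetric]) (intro dfb[OF _ p] smKb smK h)+
  also have "\<dots> = Lb1 F (\<lambda>x. bet x * L1 F h x - gg x * Lb1 F h x) p"
    by (rule opl[OF eqLb1 opU p]) (use D4[OF h] in \<open>simp add: eqon_def bet_def gg_def\<close>,
      intro differentiable_diff dfb[OF _ p] smKb smK h)
  also have "\<dots> = (bet p * Lb1 F (L1 F h) p + Lb1 F bet p * L1 F h p) - (gg p * Lb1 F (Lb1 F h) p + Lb1 F gg p * Lb1 F h p)"
    by (subst opd[OF eqLb1], (intro differentiable_mult dfb[OF _ p] sm_bet sm_gg smL1 smLb1 h)+)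
       (simp add: opm[OF eqLb1] dfb[OF _ p] sm_bet sm_gg smL1 smLb1 h)
  finally have CD: "?C - ?D = \<dots>" .
  have J1: "(?A - ?B) - (?C - ?D) = bet p * l11 p * dv h p - Lb1 F bet p * L1 F h p + Lb1 F gg p * Lb1 F h p"
    unfolding AB CD C11[OF h p] by (simp add: algebra_simps)
  have ED: "?E - ?D = - zk p * L1 F (Kb F h) p"
    using D5[OF smKb[OF h] p] by (simp add: zk_def)
  have "?A - ?G = Kb F (\<lambda>x. KK (Lb1 F h) x - Lb1 F (KK h) x) p"
    by (rule opd[OF eqKb, symmetric]) (intro dfb[OF _ p] smLb1 smK h)+
  also have "\<dots> = Kb F (\<lambda>x. - (zk x * L1 F h x)) p"
    by (rule opl[OF eqKb opU p]) (use D5[OF h] in \<open>simp add: eqon_def zk_def\<close>,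
      intro differentiable_diff dfb[OF _ p] smLb1 smK h)
  also have "\<dots> = - (zk p * Kb F (L1 F h) p + Kb F zk p * L1 F h p)"
    by (subst opu[OF eqKb], (intro differentiable_mult dfb[OF _ p] sm_zk smL1 h)+)
       (simp add: opm[OF eqKb] dfb[OF _ p] sm_zk smL1 h)
  finally have AG: "?A - ?G = \<dots>" .
  have J2: "(?E - ?D) - (?A - ?G) = - zk p * L1 F (cj (kk F)) p * Lb1 F h p + Kb F zk p * L1 F h p"
  proof -
    have "(?E - ?D) - (?A - ?G) = zk p * (Kb F (L1 F h) p - L1 F (Kb F h) p) + Kb F zk p * L1 F h p"
      unfolding ED AG by (simp add: algebra_simps)
    then show ?thesis unfolding D2[OF h p] by simp
  qed
  have CG: "?C - ?G = aa p * Lb1 F (KK h) p"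
    using D1[OF smK[OF h] p] by (simp add: algebra_simps)
  have "?E - ?B = KK (\<lambda>x. Lb1 F (Kb F h) x - Kb F (Lb1 F h) x) p"
    by (rule opd[OF eqK, symmetric]) (intro dfb[OF _ p] smLb1 smKb h)+
  also have "\<dots> = KK (\<lambda>x. aa x * Lb1 F h x) p"
    by (rule opl[OF eqK opU p]) (use D1[OF h] in \<open>simp add: eqon_def algebra_simps\<close>,
      intro differentiable_diff dfb[OF _ p] smLb1 smKb h)
  also have "\<dots> = aa p * KK (Lb1 F h) p + KK aa p * Lb1 F h p"
    by (simp add: opm[OF eqK] dfb[OF _ p] sm_aa smLb1 h)
  finally have EB: "?E - ?B = \<dots>" .
  have J3: "(?C - ?G) - (?E - ?B) = aa p * zk p * L1 F h p - KK aa p * Lb1 F h p"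
  proof -
    have "(?C - ?G) - (?E - ?B) = - aa p * (KK (Lb1 F h) p - Lb1 F (KK h) p) - KK aa p * Lb1 F h p"
      unfolding CG EB by (simp add: algebra_simps)
    then show ?thesis unfolding D5[OF h p] zk_def by simp
  qed
  have "((?A - ?B) - (?C - ?D)) + ((?E - ?D) - (?A - ?G)) + ((?C - ?G) - (?E - ?B)) = 0"
    by simp
  then show ?thesis unfolding J1 J2 J3 by (simp add: algebra_simps)
qed

lemma bet0: assumes p: "p \<in> U" shows "Kb F (kk F) p = 0"
proof -
  have c2: "Lb1 F gg p - zk p * L1 F (cj (kk F)) p - KK aa p = 0"
    using Jac1[OF sm_vzb1 p] by (simp add: tv)
  have c1: "- Lb1 F bet p + Kb F zk p + aa p * zk p = 0"
    using Jac1[OF sm_vz1 p] by (simp add: tv)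
  have "bet p * l11 p = 0"
    using Jac1[OF sm_vv p] c1 c2 by (simp add: tv)
  then show ?thesis using l11_nz[OF p] by (simp add: bet_def)
qed


definition "yk = L1 F (cj (kk F))"
lemma sm_yk: "sm U yk" unfolding yk_def by (intro smL1 sm_kkb)

lemma Jac2: assumes h: "sm U h" and p: "p \<in> U"
  shows "(aa p * l11 p + Kb F l11 p - l11 p * (cj (kk F) p * dv (cj (A1 F)) p + dv (cj (A2 F)) p)) * dv h p
     + (L1 F aa p - l11 p * dv (cj (kk F)) p - Lb1 F yk p) * Lb1 F h p = 0"
proof -
  let ?XZY = "Kb F (Lb1 F (L1 F h)) p" and ?ZXY = "Lb1 F (Kb F (L1 F h)) p" and ?YXZ = "L1 F (Kb F (Lb1 F h)) p"
  let ?YZX = "L1 F (Lb1 F (Kb F h)) p" and ?ZYX = "Lb1 F (L1 F (Kb F h)) p" and ?XYZ = "Kb F (L1 F (Lb1 F h)) p"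
  have a1: "?XZY - ?ZXY = - aa p * Lb1 F (L1 F h) p" using D1[OF smL1[OF h] p] .
  have "?YXZ - ?YZX = L1 F (\<lambda>x. Kb F (Lb1 F h) x - Lb1 F (Kb F h) x) p"
    by (rule opd[OF eqL1, symmetric]) (intro dfb[OF _ p] smKb smLb1 h)+
  also have "\<dots> = L1 F (\<lambda>x. - (aa x * Lb1 F h x)) p"
    by (rule opl[OF eqL1 opU p]) (use D1[OF h] in \<open>simp add: eqon_def\<close>,
      intro differentiable_diff dfb[OF _ p] smLb1 smKb h)
  also have "\<dots> = - (aa p * L1 F (Lb1 F h) p + L1 F aa p * Lb1 F h p)"
    by (subst opu[OF eqL1], (intro differentiable_mult dfb[OF _ p] sm_aa smLb1 h)+)
       (simp add: opm[OF eqL1] dfb[OF _ p] sm_aa smLb1 h)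
  finally have a2: "?YXZ - ?YZX = \<dots>" .
  have J1: "(?XZY - ?ZXY) - (?YXZ - ?YZX) = aa p * l11 p * dv h p + L1 F aa p * Lb1 F h p"
    unfolding a1 a2 C11[OF h p] by (simp add: algebra_simps)
  have b1: "?ZYX - ?YZX = - l11 p * dv (Kb F h) p"
    using C11[OF smKb[OF h] p] by (simp add: algebra_simps)
  have "?XZY - ?XYZ = Kb F (\<lambda>x. Lb1 F (L1 F h) x - L1 F (Lb1 F h) x) p"
    by (rule opd[OF eqKb, symmetric]) (intro dfb[OF _ p] smL1 smLb1 h)+
  also have "\<dots> = Kb F (\<lambda>x. - (l11 x * dv h x)) p"
    by (rule opl[OF eqKb opU p]) (use C11[OF h] in \<open>simp add: eqon_def\<close>,
      intro differentiable_diff dfb[OF _ p] smLb1 smL1 h)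
  also have "\<dots> = - (l11 p * Kb F (dv h) p + Kb F l11 p * dv h p)"
    by (subst opu[OF eqKb], (intro differentiable_mult dfb[OF _ p] sm_l11 smT h)+)
       (simp add: opm[OF eqKb] dfb[OF _ p] sm_l11 smT h)
  finally have b2: "?XZY - ?XYZ = \<dots>" .
  have J2: "(?ZYX - ?YZX) - (?XZY - ?XYZ) = Kb F l11 p * dv h p
       - l11 p * (dv (cj (kk F)) p * Lb1 F h p + (cj (kk F) p * dv (cj (A1 F)) p + dv (cj (A2 F)) p) * dv h p)"
  proof -
    have "(?ZYX - ?YZX) - (?XZY - ?XYZ) = Kb F l11 p * dv h p - l11 p * (dv (Kb F h) p - Kb F (dv h) p)"
      unfolding b1 b2 by (simp add: algebra_simps)
    then show ?thesis unfolding D6[OF h p] .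
  qed
  have c1: "?YXZ - ?XYZ = yk p * Lb1 F (Lb1 F h) p"
    using D2[OF smLb1[OF h] p] by (simp add: yk_def algebra_simps)
  have "?ZYX - ?ZXY = Lb1 F (\<lambda>x. L1 F (Kb F h) x - Kb F (L1 F h) x) p"
    by (rule opd[OF eqLb1, symmetric]) (intro dfb[OF _ p] smKb smL1 h)+
  also have "\<dots> = Lb1 F (\<lambda>x. yk x * Lb1 F h x) p"
    by (rule opl[OF eqLb1 opU p]) (use D2[OF h] in \<open>simp add: eqon_def yk_def algebra_simps\<close>,
      intro differentiable_diff dfb[OF _ p] smKb smL1 h)
  also have "\<dots> = yk p * Lb1 F (Lb1 F h) p + Lb1 F yk p * Lb1 F h p"
    by (simp add: opm[OF eqLb1] dfb[OF _ p] sm_yk smLb1 h)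
  finally have c2: "?ZYX - ?ZXY = \<dots>" .
  have J3: "(?YXZ - ?XYZ) - (?ZYX - ?ZXY) = - Lb1 F yk p * Lb1 F h p"
    unfolding c1 c2 by simp
  have "((?XZY - ?ZXY) - (?YXZ - ?YZX)) + ((?ZYX - ?YZX) - (?XZY - ?XYZ)) + ((?YXZ - ?XYZ) - (?ZYX - ?ZXY)) = 0"
    by simp
  then show ?thesis unfolding J1 J2 J3 by (simp add: algebra_simps)
qed

definition "BB x = cj (kk F) x * dv (cj (A1 F)) x + dv (cj (A2 F)) x - aa x"

lemma Kb_l11: assumes p: "p \<in> U" shows "Kb F l11 p = l11 p * BB p"
proof -
  have c2: "L1 F aa p - l11 p * dv (cj (kk F)) p - Lb1 F yk p = 0"
    using Jac2[OF sm_vzb1 p] by (simp add: tv)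
  have "aa p * l11 p + Kb F l11 p - l11 p * (cj (kk F) p * dv (cj (A1 F)) p + dv (cj (A2 F)) p) = 0"
    using Jac2[OF sm_vv p] c2 by (simp add: tv)
  then show ?thesis by (simp add: BB_def algebra_simps)
qed


definition "Pt x = Lb1 F l11 x / l11 x - dv (cj (A1 F)) x"

lemma BBX: "BB = (\<lambda>x. (cj (kk F) x * dv (cj (A1 F)) x + dv (cj (A2 F)) x) - aa x)"
  by (rule ext) (simp add: BB_def)
lemma sm_BB: "sm U BB" unfolding BBX using opU
  by (intro sm_diff sm_add sm_mult sm_kkb smT smA1b smA2b sm_aa)
lemma sm_Pt: "sm U Pt" unfolding Pt_def[abs_def] using opU l11_nz
  by (intro sm_diff sm_divide smLb1 sm_l11 smT smA1b) auto

lemma Kb_Pt: assumes p: "p \<in> U" shows "Kb F Pt p = - Lb1 F aa p - aa p * Pt p"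
proof -
  note l0 = l11_nz[OF p]
  have s1: "Kb F (\<lambda>x. Lb1 F l11 x / l11 x) p = (Kb F (Lb1 F l11) p * l11 p - Lb1 F l11 p * Kb F l11 p) / (l11 p)^2"
    by (rule opdiv[OF eqKb]) (intro dfb[OF _ p] smLb1 sm_l11 l0)+
  have s2: "Kb F (Lb1 F l11) p = Lb1 F (Kb F l11) p - aa p * Lb1 F l11 p"
    using D1[OF sm_l11 p] by (simp add: algebra_simps)
  have "Lb1 F (Kb F l11) p = Lb1 F (\<lambda>x. l11 x * BB x) p"
    by (rule opl[OF eqLb1 opU p]) (use Kb_l11 in \<open>simp add: eqon_def\<close>, intro dfb[OF _ p] smKb sm_l11)
  also have "\<dots> = l11 p * Lb1 F BB p + Lb1 F l11 p * BB p"
    by (simp add: opm[OF eqLb1] dfb[OF _ p] sm_l11 sm_BB)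
  finally have s3: "Lb1 F (Kb F l11) p = \<dots>" .
  have q1: "Kb F (\<lambda>x. Lb1 F l11 x / l11 x) p = Lb1 F BB p - aa p * Lb1 F l11 p / l11 p"
    unfolding s1 s2 s3 Kb_l11[OF p] using l0 by (simp add: field_simps power2_eq_square)
  have s4: "Kb F (dv (cj (A1 F))) p = dv (Kb F (cj (A1 F))) p - (dv (cj (kk F)) p * Lb1 F (cj (A1 F)) p
     + (cj (kk F) p * dv (cj (A1 F)) p + dv (cj (A2 F)) p) * dv (cj (A1 F)) p)"
    using D6[OF smA1b p] by (simp add: algebra_simps)
  have "dv (Kb F (cj (A1 F))) p = dv (\<lambda>x. cj (kk F) x * Lb1 F (cj (A1 F)) x + Lb1 F (cj (A2 F)) x) p"
    by (rule opl[OF eqT opU p]) (simp add: eqon_def KbX Lb12_sym, intro dfb[OF _ p] smKb smA1b)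
  also have "\<dots> = cj (kk F) p * dv (Lb1 F (cj (A1 F))) p + dv (cj (kk F)) p * Lb1 F (cj (A1 F)) p
      + dv (Lb1 F (cj (A2 F))) p"
    by (rule opmadd[OF eqT]) (intro dfb[OF _ p] sm_kkb smLb1 smA1b smA2b)+
  finally have s5: "dv (Kb F (cj (A1 F))) p = \<dots>" .
  have s6: "Lb1 F BB p = cj (kk F) p * Lb1 F (dv (cj (A1 F))) p + aa p * dv (cj (A1 F)) p
      + Lb1 F (dv (cj (A2 F))) p - Lb1 F aa p"
  proof -
    have "Lb1 F BB p = Lb1 F (\<lambda>x. cj (kk F) x * dv (cj (A1 F)) x + dv (cj (A2 F)) x) p - Lb1 F aa p"
      unfolding BBX by (rule opd[OF eqLb1])
        (intro differentiable_add differentiable_mult dfb[OF _ p] sm_kkb smT smA1b smA2b sm_aa)+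
    also have "Lb1 F (\<lambda>x. cj (kk F) x * dv (cj (A1 F)) x + dv (cj (A2 F)) x) p
      = cj (kk F) p * Lb1 F (dv (cj (A1 F))) p + Lb1 F (cj (kk F)) p * dv (cj (A1 F)) p + Lb1 F (dv (cj (A2 F))) p"
      by (rule opmadd[OF eqLb1]) (intro dfb[OF _ p] sm_kkb smT smA1b smA2b)+
    finally show ?thesis by (simp add: aa_def)
  qed
  have "Kb F Pt p = Kb F (\<lambda>x. Lb1 F l11 x / l11 x - dv (cj (A1 F)) x) p"
    by (simp add: Pt_def[abs_def])
  also have "\<dots> = Kb F (\<lambda>x. Lb1 F l11 x / l11 x) p - Kb F (dv (cj (A1 F))) p"
    by (rule opd[OF eqKb]) (intro differentiable_divide dfb[OF _ p] smLb1 sm_l11 smT smA1b l0)+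
  also have "\<dots> = - Lb1 F aa p - aa p * Pt p"
    unfolding q1 s4 s5 s6 CT1[OF smA1b p] CT1[OF smA2b p] Pt_def by (simp add: algebra_simps)
  finally show ?thesis .
qed

lemma Pb_eq: assumes p: "p \<in> U" shows "cj (PP F) p = Pt p"
proof -
  note l0 = l11_nz[OF p]
  have ellX: "ell F = (\<lambda>x. \<i> * l11 x)" by (rule ext) (simp add: ell_eq)
  have "dz1 (ell F) p + A1 F p * dv (ell F) p = L1 F (ell F) p" by (simp add: L1_def)
  also have "\<dots> = \<i> * L1 F l11 p" unfolding ellX by (rule opc[OF eqL1 dfb[OF sm_l11 p]])
  finally have e1: "dz1 (ell F) p + A1 F p * dv (ell F) p = \<i> * L1 F l11 p" .
  have PP: "PP F p = L1 F l11 p / l11 p - dv (A1 F) p"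
    unfolding PP_def e1 using l0 by (simp add: ell_eq field_simps)
  have "cnj (L1 F l11 p) = Lb1 F (cj l11) p" by (rule cnj_L1[OF dfb[OF sm_l11 p]])
  also have "\<dots> = Lb1 F (\<lambda>x. - l11 x) p"
    by (rule opl[OF eqLb1 opU p]) (simp add: eqon_def cj_def l11_herm, intro dfb[OF _ p] sm_cj sm_l11)
  also have "\<dots> = - Lb1 F l11 p" by (rule opu[OF eqLb1 dfb[OF sm_l11 p]])
  finally have e2: "cnj (L1 F l11 p) = - Lb1 F l11 p" .
  have e3: "cnj (dv (A1 F) p) = dv (cj (A1 F)) p" by (rule cnj_dv[OF dfb[OF smA1 p]])
  have "cj (PP F) p = cnj (PP F p)" by (simp add: cj_def)
  then show ?thesis unfolding PP Pt_def using e2 e3 l11_herm[OF p] l0 by simp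
qed


definition "k2 = Lb1 F zk"
definition "k3 = Lb1 F k2"
definition "Pb = cj (PP F)"
definition "za = Lb1 F aa"
lemma sm_k2: "sm U k2" unfolding k2_def by (intro smLb1 sm_zk)
lemma sm_k3: "sm U k3" unfolding k3_def by (intro smLb1 sm_k2)
lemma sm_za: "sm U za" unfolding za_def by (intro smLb1 sm_aa)
lemma eq_Pb: "eqon U Pt Pb" using Pb_eq by (simp add: eqon_def Pb_def)
lemma sm_Pb: "sm U Pb" using sm_local[OF opU eq_Pb sm_Pt] .
lemma sm_ZPb: "sm U (Lb1 F Pb)" by (intro smLb1 sm_Pb)
lemma fold_k: "Lb1 F zk = k2" "Lb1 F k2 = k3" "Lb1 F aa = za" by (simp_all add: k2_def k3_def za_def)
lemma zk_nz: "p \<in> U \<Longrightarrow> zk p \<noteq> 0" using k10 by (simp add: zk_def)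

lemma X1: assumes p: "p \<in> U" shows "Kb F zk p = - (aa p * zk p)"
proof -
  have "Lb1 F (Kb F (kk F)) p = Lb1 F (\<lambda>x. 0) p"
    by (rule opl[OF eqLb1 opU p]) (simp add: eqon_def bet0, intro dfb[OF _ p] smKb sm_kk)
  then show ?thesis using D1[OF sm_kk p] by (simp add: zk_def)
qed

lemma X2: assumes p: "p \<in> U" shows "Kb F k2 p = - (za p * zk p) - 2 * (aa p * k2 p)"
proof -
  have "Lb1 F (Kb F zk) p = Lb1 F (\<lambda>x. - (aa x * zk x)) p"
    by (rule opl[OF eqLb1 opU p]) (simp add: eqon_def X1, intro dfb[OF _ p] smKb sm_zk)
  also have "\<dots> = - (aa p * k2 p + za p * zk p)"
    by (simp add: opu[OF eqLb1] opm[OF eqLb1] dfb[OF _ p] sm_aa sm_zk fold_k differentiable_mult)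
  finally have e1: "Lb1 F (Kb F zk) p = \<dots>" .
  have e2: "Kb F k2 p = Lb1 F (Kb F zk) p - aa p * k2 p"
    using D1[OF sm_zk p] unfolding fold_k by (simp add: algebra_simps)
  show ?thesis unfolding e2 e1 by (simp add: algebra_simps)
qed

lemma X3: assumes p: "p \<in> U" shows "Kb F k3 p = - (Lb1 F za p * zk p) - 3 * (za p * k2 p) - 3 * (aa p * k3 p)"
proof -
  have "Lb1 F (Kb F k2) p = Lb1 F (\<lambda>x. - (za x * zk x) - 2 * (aa x * k2 x)) p"
    by (rule opl[OF eqLb1 opU p]) (simp add: eqon_def X2, intro dfb[OF _ p] smKb sm_k2)
  also have "\<dots> = - (za p * k2 p + Lb1 F za p * zk p) - 2 * (aa p * k3 p + za p * k2 p)"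
    by (simp add: opd[OF eqLb1] opu[OF eqLb1] opc[OF eqLb1] opm[OF eqLb1] dfb[OF _ p] sm_aa sm_zk sm_za sm_k2
       fold_k differentiable_mult)
  finally have e1: "Lb1 F (Kb F k2) p = \<dots>" .
  have e2: "Kb F k3 p = Lb1 F (Kb F k2) p - aa p * k3 p"
    using D1[OF sm_k2 p] unfolding fold_k by (simp add: algebra_simps)
  show ?thesis unfolding e2 e1 by (simp add: algebra_simps)
qed

lemma XP: assumes p: "p \<in> U" shows "Kb F Pb p = - za p - aa p * Pb p"
proof -
  have "Kb F Pb p = Kb F Pt p"
    by (rule opl[OF eqKb opU p, symmetric]) (use eq_Pb in \<open>simp add: eqon_def\<close>, intro dfb[OF sm_Pt p])
  then show ?thesis using Kb_Pt[OF p] Pb_eq[OF p] by (simp add: za_def Pb_def)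
qed

lemma XZP: assumes p: "p \<in> U" shows "Kb F (Lb1 F Pb) p = - Lb1 F za p - za p * Pb p - 2 * (aa p * Lb1 F Pb p)"
proof -
  have "Lb1 F (Kb F Pb) p = Lb1 F (\<lambda>x. - za x - aa x * Pb x) p"
    by (rule opl[OF eqLb1 opU p]) (simp add: eqon_def XP, intro dfb[OF _ p] smKb sm_Pb)
  also have "\<dots> = - Lb1 F za p - (aa p * Lb1 F Pb p + za p * Pb p)"
    by (simp add: opd[OF eqLb1] opu[OF eqLb1] opm[OF eqLb1] dfb[OF _ p] sm_aa sm_za sm_Pb fold_k differentiable_mult)
  finally have e1: "Lb1 F (Kb F Pb) p = \<dots>" .
  have e2: "Kb F (Lb1 F Pb) p = Lb1 F (Kb F Pb) p - aa p * Lb1 F Pb p"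
    using D1[OF sm_Pb p] by (simp add: algebra_simps)
  show ?thesis unfolding e2 e1 by (simp add: algebra_simps)
qed


lemma H0X: "H0 F = (\<lambda>p. - (1/6) * k3 p / zk p + (2/9) * (k2 p)^2 / (zk p)^2
        + (1/18) * k2 p * Pb p / zk p + (1/6) * Lb1 F Pb p - (1/9) * (Pb p)^2)"
  by (rule ext) (simp add: H0_def Let_def zk_def k2_def k3_def Pb_def)

lemma final: assumes p: "p \<in> U" shows "Kb F (H0 F) p = - 2 * aa p * H0 F p"
proof -
  note z = zk_nz[OF p]
  show ?thesis
    unfolding H0X
    apply (simp add: opa[OF eqKb] opd[OF eqKb] opm[OF eqKb] opdiv[OF eqKb] opp[OF eqKb] opu[OF eqKb]
        opc[OF eqKb] dfb[OF _ p] sm_k3 sm_zk sm_k2 sm_Pb sm_ZPb z X1[OF p] X2[OF p] X3[OF p] XP[OF p] XZP[OF p])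
    using z apply (simp add: field_simps power2_eq_square)
    apply (simp add: algebra_simps eval_nat_numeral)
    done
qed

end

theorem lemma8p8:
  fixes F :: "pt \<Rightarrow> real" and U :: "pt set"
  assumes "open U"
    and "smooth_on U (Fc F)"
    and "\<forall>p\<in>U. ell F p \<noteq> 0"
    and "\<forall>p\<in>U. levi_rank_one F p"
    and "\<forall>p\<in>U. Lb1 F (kk F) p \<noteq> 0"
  shows "\<forall>p\<in>U. Kb F (H0 F) p = - 2 * Lb1 F (cj (kk F)) p * H0 F p"
proof -
  interpret setting F U
    by unfold_locales (use assms in auto)
  show ?thesis using final by (simp add: aa_def)
qed

end
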